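(* Let $s \geqslant 1/2$, $\varkappa>0$, $T>0$, and let $(\eta,v) \in C([0,T]; H^{s+1/2}(\mathbb{R})\times H^s(\mathbb{R}))$ be a solution of \[ \partial_t \eta = -\partial_x v - i \tanh D(\eta v), \qquad \partial_t v = -i \tanh D (1+\varkappa D^2)\eta - i \tanh D (v^2/2). \] If in addition $\eta$ satisfies the non-cavitation condition (there exist $h,H>0$ such that $H \geqslant \eta \geqslant h-1$ on $\mathbb{R}\times[0,T]$), then $E^s(\eta,v) \sim \|(\eta,v)\|^2_{H^{s+1/2}_\varkappa\times H^s}$ on $[0,T]$, i.e. there are constants $c, C>0$ with $c\|(\eta,v)\|^2_{H^{s+1/2}_\varkappa\times H^s} \leqslant E^s(\eta,v) \leqslant C\|(\eta,v)\|^2_{H^{s+1/2}_\varkappa\times H^s}$ for all $t\in[0,T]$.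
   Context: $D=-i\partial_x$; $\varphi(D)$ is the Fourier multiplier with symbol $\varphi(\xi)$. $J^\sigma$ has symbol $(1+\xi^2)^{\sigma/2}$, $H^\sigma$ has norm $\|J^\sigma f\|_{L^2}$. $K$ has symbol $\sqrt{\tanh\xi/\xi}$. $\|(\eta,v)\|^2_{H^{s+1/2}_\varkappa\times H^s} = \varkappa\|\partial_x\eta\|^2_{H^{s-1/2}} + \|\eta\|^2_{H^{s-1/2}} + \|K^{-1}v\|^2_{H^{s-1/2}}$ and $E^s(\eta,v) = \frac12\|(\eta,v)\|^2_{H^{s+1/2}_\varkappa\times H^s} + \frac12\int \eta\,(J^{s-1/2}v)^2\,dx$. *)

theory Defs
  imports "HOL-Analysis.Analysis"
begin

text \<open>Spatial functions are complex valued, real ones are embedded via cx.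
  Fourier convention: FT1 f xi = integral of f x * exp(-i x xi) dx, so that
  D = -i d/dx has symbol xi and Plancherel reads norm f^2 = (1/2pi) norm (FT f)^2.\<close>

definition cx :: "(real \<Rightarrow> real) \<Rightarrow> real \<Rightarrow> complex" where
  "cx f = (\<lambda>x. complex_of_real (f x))"

definition L2 :: "(real \<Rightarrow> complex) \<Rightarrow> bool" where
  "L2 f \<longleftrightarrow> f \<in> borel_measurable lborel \<and> integrable lborel (\<lambda>x. (cmod (f x))^2)"

definition FT1 :: "(real \<Rightarrow> complex) \<Rightarrow> real \<Rightarrow> complex" where
  "FT1 f \<xi> = (\<integral>x. f x * exp (- \<i> * complex_of_real (x * \<xi>)) \<partial>lborel)"

text \<open>F is the (L2) Fourier transform of f: F is square integrable and
  the weak Parseval identity holds against all phi in L1 and L2.\<close>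
definition is_FT :: "(real \<Rightarrow> complex) \<Rightarrow> (real \<Rightarrow> complex) \<Rightarrow> bool" where
  "is_FT f F \<longleftrightarrow> L2 F \<and>
     (\<forall>\<phi>. integrable lborel \<phi> \<and> L2 \<phi> \<longrightarrow>
        (\<integral>x. f x * FT1 \<phi> x \<partial>lborel) = (\<integral>\<xi>. F \<xi> * \<phi> \<xi> \<partial>lborel))"

definition FT :: "(real \<Rightarrow> complex) \<Rightarrow> real \<Rightarrow> complex" where
  "FT f = (SOME F. is_FT f F)"

definition fmult :: "(real \<Rightarrow> complex) \<Rightarrow> (real \<Rightarrow> complex) \<Rightarrow> real \<Rightarrow> complex" where
  "fmult m f = (SOME g. L2 g \<and> is_FT g (\<lambda>\<xi>. m \<xi> * FT f \<xi>))"

definition in_Hs :: "real \<Rightarrow> (real \<Rightarrow> complex) \<Rightarrow> bool" where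
  "in_Hs \<sigma> f \<longleftrightarrow> L2 f \<and>
     integrable lborel (\<lambda>\<xi>. (1 + \<xi>^2) powr \<sigma> * (cmod (FT f \<xi>))^2)"

definition Hs_norm :: "real \<Rightarrow> (real \<Rightarrow> complex) \<Rightarrow> real" where
  "Hs_norm \<sigma> f = sqrt ((1 / (2 * pi)) *
     (\<integral>\<xi>. (1 + \<xi>^2) powr \<sigma> * (cmod (FT f \<xi>))^2 \<partial>lborel))"

definition J_symb :: "real \<Rightarrow> real \<Rightarrow> complex" where
  "J_symb \<sigma> \<xi> = complex_of_real ((1 + \<xi>^2) powr (\<sigma> / 2))"

definition dx_symb :: "real \<Rightarrow> complex" where
  "dx_symb \<xi> = \<i> * complex_of_real \<xi>"

definition K_symb :: "real \<Rightarrow> real" where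
  "K_symb \<xi> = (if \<xi> = 0 then 1 else sqrt (tanh \<xi> / \<xi>))"

definition Kinv_symb :: "real \<Rightarrow> complex" where
  "Kinv_symb \<xi> = complex_of_real (1 / K_symb \<xi>)"

text \<open>Squared norm in H^{s+1/2}_kappa x H^s.\<close>
definition energy_norm2 :: "real \<Rightarrow> real \<Rightarrow> (real \<Rightarrow> real) \<Rightarrow> (real \<Rightarrow> real) \<Rightarrow> real" where
  "energy_norm2 s \<kappa> \<eta> v =
     \<kappa> * (Hs_norm (s - 1/2) (fmult dx_symb (cx \<eta>)))^2
     + (Hs_norm (s - 1/2) (cx \<eta>))^2
     + (Hs_norm (s - 1/2) (fmult Kinv_symb (cx v)))^2"

text \<open>E^s(eta,v); J^{s-1/2} v is real valued (even real symbol), we take its real part.\<close>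
definition Es :: "real \<Rightarrow> real \<Rightarrow> (real \<Rightarrow> real) \<Rightarrow> (real \<Rightarrow> real) \<Rightarrow> real" where
  "Es s \<kappa> \<eta> v = (1/2) * energy_norm2 s \<kappa> \<eta> v
     + (1/2) * (\<integral>x. \<eta> x * (Re (fmult (J_symb (s - 1/2)) (cx v) x))^2 \<partial>lborel)"

definition ftest :: "(real \<Rightarrow> complex) \<Rightarrow> bool" where
  "ftest \<phi> \<longleftrightarrow> \<phi> \<in> borel_measurable lborel \<and>
     (\<exists>R B. \<forall>\<xi>. cmod (\<phi> \<xi>) \<le> B \<and> (\<bar>\<xi>\<bar> > R \<longrightarrow> \<phi> \<xi> = 0))"

definition fpair :: "(real \<Rightarrow> complex) \<Rightarrow> (real \<Rightarrow> complex) \<Rightarrow> complex" where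
  "fpair F \<phi> = (\<integral>\<xi>. F \<xi> * \<phi> \<xi> \<partial>lborel)"

definition cont_Hs :: "real \<Rightarrow> real \<Rightarrow> (real \<Rightarrow> real \<Rightarrow> real) \<Rightarrow> bool" where
  "cont_Hs \<sigma> T u \<longleftrightarrow> (\<forall>t\<in>{0..T}. in_Hs \<sigma> (cx (u t))) \<and>
     (\<forall>t\<in>{0..T}. ((\<lambda>t'. Hs_norm \<sigma> (\<lambda>x. cx (u t') x - cx (u t) x)) \<longlongrightarrow> 0)
                    (at t within {0..T}))"

text \<open>Solution of
  d_t eta = - d_x v - i tanh D (eta v),
  d_t v   = - i tanh D (1 + kappa D^2) eta - i tanh D (v^2/2)
  on [0,T], in the weak sense on the Fourier side: for every Fourier test
  function phi the pairings of the Fourier transforms are differentiable in t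
  (one-sided at endpoints) with the derivative given by the equations.\<close>
definition ww_solution :: "real \<Rightarrow> real \<Rightarrow> real \<Rightarrow> (real \<Rightarrow> real \<Rightarrow> real) \<Rightarrow> (real \<Rightarrow> real \<Rightarrow> real) \<Rightarrow> bool" where
  "ww_solution s \<kappa> T \<eta> v \<longleftrightarrow>
     cont_Hs (s + 1/2) T \<eta> \<and> cont_Hs s T v \<and>
     (\<forall>\<phi>. ftest \<phi> \<longrightarrow> (\<forall>t\<in>{0..T}.
        ((\<lambda>\<tau>. fpair (FT (cx (\<eta> \<tau>))) \<phi>) has_vector_derivative
          fpair (\<lambda>\<xi>. - \<i> * complex_of_real \<xi> * FT (cx (v t)) \<xi>
                     - \<i> * complex_of_real (tanh \<xi>) * FT1 (cx (\<lambda>x. \<eta> t x * v t x)) \<xi>) \<phi>)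
        (at t within {0..T})
      \<and>
        ((\<lambda>\<tau>. fpair (FT (cx (v \<tau>))) \<phi>) has_vector_derivative
          fpair (\<lambda>\<xi>. - \<i> * complex_of_real (tanh \<xi> * (1 + \<kappa> * \<xi>^2)) * FT (cx (\<eta> t)) \<xi>
                     - \<i> * complex_of_real (tanh \<xi>) * FT1 (cx (\<lambda>x. (v t x)^2 / 2)) \<xi>) \<phi>)
        (at t within {0..T})))"

end

theory Submission
  imports Defs "HOL-Probability.Probability"
begin

lemma gauss_char:
  "(\<integral>x. complex_of_real (exp (- x\<^sup>2 / 2)) * iexp (t * x) \<partial>lborel) = complex_of_real (sqrt (2*pi) * exp (- t\<^sup>2 / 2))"
proof -
  have "char std_normal_distribution t = complex_of_real (exp (- (t^2) / 2))"
    by (simp add: char_std_normal_distribution)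
  moreover have "char std_normal_distribution t = (\<integral>x. std_normal_density x *\<^sub>R iexp (t * x) \<partial>lborel)"
    unfolding char_def
    by (subst integral_density) (auto simp: normal_density_nonneg)
  ultimately have "(\<integral>x. std_normal_density x *\<^sub>R iexp (t * x) \<partial>lborel) = complex_of_real (exp (- (t^2) / 2))"
    by simp
  then have "(\<integral>x. complex_of_real (1 / sqrt (2 * pi)) * (complex_of_real (exp (- x\<^sup>2 / 2)) * iexp (t * x)) \<partial>lborel) = complex_of_real (exp (- (t^2) / 2))"
    by (simp add: std_normal_density_def scaleR_conv_of_real mult.assoc)
  then have "complex_of_real (1 / sqrt (2 * pi)) * (\<integral>x. complex_of_real (exp (- x\<^sup>2 / 2)) * iexp (t * x) \<partial>lborel) = complex_of_real (exp (- (t^2) / 2))"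
    by simp
  then show ?thesis
    by (simp add: field_simps of_real_mult[symmetric] del: of_real_mult)
qed

lemma integrable_gauss:
  fixes a c :: real
  assumes "a > 0" shows "integrable lborel (\<lambda>y. exp (- a * (y - c)\<^sup>2))"
proof -
  define \<sigma> where "\<sigma> = 1 / sqrt (2*a)"
  have s: "\<sigma> > 0" "\<sigma>\<^sup>2 = 1/(2*a)" using assms by (auto simp: \<sigma>_def power_divide)
  have "exp (- a * (y - c)\<^sup>2) = sqrt (2 * pi * \<sigma>\<^sup>2) * normal_density c \<sigma> y" for y
    using s assms by (simp add: normal_density_def field_simps)
  then show ?thesis
    using integrable_normal_density[OF s(1), of c] by simp
qed

lemma GFT:
  assumes a: "a > 0"
  shows "FT1 (\<lambda>y. complex_of_real (exp (- a * (y - c)\<^sup>2))) x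
       = exp (- \<i> * complex_of_real (x * c)) * complex_of_real (sqrt (pi / a) * exp (- x\<^sup>2 / (4 * a)))"
proof -
  define s where "s = 1 / sqrt (2*a)"
  have s: "s > 0" "a * s\<^sup>2 = 1/2" using a by (auto simp: s_def power_divide)
  have "FT1 (\<lambda>y. complex_of_real (exp (- a * (y - c)\<^sup>2))) x
     = (\<integral>y. complex_of_real (exp (- a * (y - c)\<^sup>2)) * exp (- \<i> * complex_of_real (y * x)) \<partial>lborel)"
    by (simp add: FT1_def)
  also have "\<dots> = \<bar>s\<bar> *\<^sub>R (\<integral>u. complex_of_real (exp (- a * ((c + s * u) - c)\<^sup>2)) * exp (- \<i> * complex_of_real ((c + s * u) * x)) \<partial>lborel)"
    using s by (subst lborel_integral_real_affine[where c=s and t=c]) auto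
  also have "(\<lambda>u. complex_of_real (exp (- a * ((c + s * u) - c)\<^sup>2)) * exp (- \<i> * complex_of_real ((c + s * u) * x)))
      = (\<lambda>u. exp (- \<i> * complex_of_real (x * c)) * (complex_of_real (exp (- u\<^sup>2 / 2)) * iexp ((- x * s) * u)))"
  proof
    fix u
    have e1: "exp (- a * ((c + s * u) - c)\<^sup>2) = exp (- u\<^sup>2 / 2)"
      using s by (intro arg_cong[where f=exp]) (simp add: power_mult_distrib field_simps)
    have e2: "exp (- \<i> * complex_of_real ((c + s * u) * x)) = exp (- \<i> * complex_of_real (x * c)) * iexp ((- x * s) * u)"
      by (subst exp_add[symmetric]) (rule arg_cong[where f=exp], simp add: field_simps)
    show "complex_of_real (exp (- a * ((c + s * u) - c)\<^sup>2)) * exp (- \<i> * complex_of_real ((c + s * u) * x))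
      = exp (- \<i> * complex_of_real (x * c)) * (complex_of_real (exp (- u\<^sup>2 / 2)) * iexp ((- x * s) * u))"
      unfolding e1 e2 by (simp only: mult_ac)
  qed
  also have "(\<integral>u. exp (- \<i> * complex_of_real (x * c)) * (complex_of_real (exp (- u\<^sup>2 / 2)) * iexp ((- x * s) * u)) \<partial>lborel)
     = exp (- \<i> * complex_of_real (x * c)) * complex_of_real (sqrt (2*pi) * exp (- (- x * s)\<^sup>2 / 2))"
    by (simp only: integral_mult_right_zero gauss_char)
  finally have 1: "FT1 (\<lambda>y. complex_of_real (exp (- a * (y - c)\<^sup>2))) x = \<bar>s\<bar> *\<^sub>R (exp (- \<i> * complex_of_real (x * c)) * complex_of_real (sqrt (2*pi) * exp (- (- x * s)\<^sup>2 / 2)))" .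
  have ss: "s\<^sup>2 = 1/(2*a)" using s(2) a by (simp add: field_simps)
  have 2: "- (- x * s)\<^sup>2 / 2 = - x\<^sup>2 / (4 * a)"
    using a by (simp add: power_mult_distrib ss field_simps)
  have 3: "\<bar>s\<bar> * sqrt (2*pi) = sqrt (pi / a)"
    using s a by (simp add: s_def real_sqrt_divide field_simps real_sqrt_mult)
  show ?thesis
    unfolding 1 2 by (simp add: scaleR_conv_of_real 3[symmetric] mult_ac)
qed

definition nrm2 :: "(real \<Rightarrow> complex) \<Rightarrow> real" where
  "nrm2 f = (\<integral>x. (cmod (f x))\<^sup>2 \<partial>lborel)"

lemma nrm2_nonneg: "nrm2 f \<ge> 0"
  unfolding nrm2_def by (intro integral_nonneg_AE) auto

lemma L2_meas[measurable_dest]: "L2 f \<Longrightarrow> f \<in> borel_measurable lborel"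
  by (simp add: L2_def)

lemma L2_int: "L2 f \<Longrightarrow> integrable lborel (\<lambda>x. (cmod (f x))\<^sup>2)"
  by (simp add: L2_def)

lemma amgm_t:
  fixes a b t :: real assumes "t > 0"
  shows "a * b \<le> (t * a\<^sup>2 + b\<^sup>2 / t) / 2"
proof -
  have "0 \<le> (t * a - b)\<^sup>2 / t" using assms by simp
  also have "(t * a - b)\<^sup>2 / t = t * a\<^sup>2 + b\<^sup>2 / t - 2 * a * b"
    using assms by (simp add: power2_eq_square field_simps)
  finally show ?thesis by simp
qed

lemma amgm2: fixes a b :: real shows "a * b \<le> (a\<^sup>2 + b\<^sup>2) / 2"
  using amgm_t[of 1 a b] by simp

lemma L2_bound:
  assumes "L2 f" "g \<in> borel_measurable lborel" "AE x in lborel. cmod (g x) \<le> C * cmod (f x)"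
  shows "L2 g"
  unfolding L2_def
proof (intro conjI)
  show "g \<in> borel_measurable lborel" by fact
  show "integrable lborel (\<lambda>x. (cmod (g x))\<^sup>2)"
  proof (rule Bochner_Integration.integrable_bound)
    show "integrable lborel (\<lambda>x. C\<^sup>2 * (cmod (f x))\<^sup>2)" using L2_int[OF assms(1)] by simp
    show "(\<lambda>x. (cmod (g x))\<^sup>2) \<in> borel_measurable lborel" using assms(2) by measurable
    show "AE x in lborel. norm ((cmod (g x))\<^sup>2) \<le> norm (C\<^sup>2 * (cmod (f x))\<^sup>2)"
      using assms(3)
    proof eventually_elim
      case (elim x)
      have "(cmod (g x))\<^sup>2 \<le> (C * cmod (f x))\<^sup>2"
        using elim by (intro power_mono) auto
      then show ?case by (simp add: power_mult_distrib)
    qed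
  qed
qed

lemma L2_bound2:
  assumes "L2 f" "L2 g" "h \<in> borel_measurable lborel" "\<And>x. cmod (h x) \<le> cmod (f x) + cmod (g x)"
  shows "L2 h"
  unfolding L2_def
proof (intro conjI)
  show "h \<in> borel_measurable lborel" by fact
  show "integrable lborel (\<lambda>x. (cmod (h x))\<^sup>2)"
  proof (rule Bochner_Integration.integrable_bound)
    show "integrable lborel (\<lambda>x. 2 * (cmod (f x))\<^sup>2 + 2 * (cmod (g x))\<^sup>2)"
      using L2_int[OF assms(1)] L2_int[OF assms(2)] by simp
    show "(\<lambda>x. (cmod (h x))\<^sup>2) \<in> borel_measurable lborel" using assms(3) by measurable
    show "AE x in lborel. norm ((cmod (h x))\<^sup>2) \<le> norm (2 * (cmod (f x))\<^sup>2 + 2 * (cmod (g x))\<^sup>2)"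
    proof (intro AE_I2)
      fix x
      have "(cmod (h x))\<^sup>2 \<le> (cmod (f x) + cmod (g x))\<^sup>2"
        using assms(4)[of x] by (intro power_mono) auto
      also have "\<dots> \<le> 2 * (cmod (f x))\<^sup>2 + 2 * (cmod (g x))\<^sup>2"
        using amgm2[of "cmod (f x)" "cmod (g x)"] by (simp add: power2_sum)
      finally show "norm ((cmod (h x))\<^sup>2) \<le> norm (2 * (cmod (f x))\<^sup>2 + 2 * (cmod (g x))\<^sup>2)"
        by simp
    qed
  qed
qed

lemma L2_add: assumes "L2 f" "L2 g" shows "L2 (\<lambda>x. f x + g x)"
proof (rule L2_bound2[OF assms])
  have [measurable]: "f \<in> borel_measurable lborel" "g \<in> borel_measurable lborel" using assms by (auto simp: L2_def)
  show "(\<lambda>x. f x + g x) \<in> borel_measurable lborel" by measurable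
qed (rule norm_triangle_ineq)

lemma L2_diff: assumes "L2 f" "L2 g" shows "L2 (\<lambda>x. f x - g x)"
proof (rule L2_bound2[OF assms])
  have [measurable]: "f \<in> borel_measurable lborel" "g \<in> borel_measurable lborel" using assms by (auto simp: L2_def)
  show "(\<lambda>x. f x - g x) \<in> borel_measurable lborel" by measurable
qed (rule norm_triangle_ineq4)

lemma L2_cmult: assumes "L2 f" shows "L2 (\<lambda>x. c * f x)"
proof (rule L2_bound[OF assms, of _ "cmod c"])
  have [measurable]: "f \<in> borel_measurable lborel" using assms by (auto simp: L2_def)
  show "(\<lambda>x. c * f x) \<in> borel_measurable lborel" by measurable
qed (auto simp: norm_mult)

lemma L2_mult_bounded:
  assumes "L2 f" "m \<in> borel_measurable lborel" "\<And>x. cmod (m x) \<le> B"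
  shows "L2 (\<lambda>x. m x * f x)"
proof (rule L2_bound[of f _ B])
  have [measurable]: "f \<in> borel_measurable lborel" using assms by (auto simp: L2_def)
  show "(\<lambda>x. m x * f x) \<in> borel_measurable lborel" using assms(2) by measurable
  show "AE x in lborel. cmod (m x * f x) \<le> B * cmod (f x)"
    using assms(3) by (auto simp: norm_mult intro!: mult_right_mono)
qed (use assms in auto)

lemma L2_prod_int:
  assumes "L2 f" "L2 g" shows "integrable lborel (\<lambda>x. f x * g x)"
proof (rule Bochner_Integration.integrable_bound)
  show "integrable lborel (\<lambda>x. ((cmod (f x))\<^sup>2 + (cmod (g x))\<^sup>2) / 2)"
    using L2_int[OF assms(1)] L2_int[OF assms(2)] by simp
  show "(\<lambda>x. f x * g x) \<in> borel_measurable lborel" using assms by measurable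
  show "AE x in lborel. norm (f x * g x) \<le> norm (((cmod (f x))\<^sup>2 + (cmod (g x))\<^sup>2) / 2)"
    using amgm2 by (auto simp: norm_mult)
qed

lemma L2_prod_int_norm:
  assumes "L2 f" "L2 g" shows "integrable lborel (\<lambda>x. cmod (f x) * cmod (g x))"
  using integrable_norm[OF L2_prod_int[OF assms]] by (simp add: norm_mult)

lemma sqrt_bound_lemma:
  fixes X A B :: real
  assumes A: "A \<ge> 0" and B: "B \<ge> 0" and H: "\<And>t. t > 0 \<Longrightarrow> X \<le> (t * A + B / t) / 2"
  shows "X \<le> sqrt A * sqrt B"
proof (cases "A > 0 \<and> B > 0")
  case True
  define t where "t = sqrt B / sqrt A"
  have t: "t > 0" using True by (simp add: t_def)
  have "t * A = sqrt B * (A / sqrt A)" unfolding t_def by simp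
  also have "A / sqrt A = sqrt A" using A by (rule real_div_sqrt)
  finally have 1: "t * A = sqrt A * sqrt B" by simp
  have "B / t = sqrt A * (B / sqrt B)" unfolding t_def using True by simp
  also have "B / sqrt B = sqrt B" using B by (rule real_div_sqrt)
  finally have 2: "B / t = sqrt A * sqrt B" by simp
  show ?thesis using H[OF t] 1 2 by simp
next
  case False
  then have AB: "A = 0 \<or> B = 0" using A B by auto
  show ?thesis
  proof (rule ccontr)
    assume "\<not> ?thesis"
    then have X: "X > 0" using AB by auto
    show False
    proof (cases "A = 0")
      case True
      have p: "B / X + 1 > 0" using X B by (metis add_pos_nonneg divide_nonneg_pos zero_less_one add.commute)
      have "X \<le> ((B / X + 1) * A + B / (B / X + 1)) / 2" by (rule H[OF p])
      then have "X \<le> (B / (B / X + 1)) / 2" using True by simp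
      moreover have "B / (B / X + 1) \<le> X"
      proof -
        have "B / (B / X + 1) = B * X / (B + X)" using X by (simp add: field_simps)
        also have "B * X / (B + X) \<le> X" using X B by (simp add: field_simps)
        finally show ?thesis .
      qed
      moreover have "\<And>Y::real. X \<le> Y / 2 \<Longrightarrow> Y \<le> X \<Longrightarrow> False" using X by linarith
      ultimately show False by blast
    next
      case False
      then have B0: "B = 0" using AB by auto
      have "X \<le> ((X / (A + 1)) * A) / 2" using H[of "X / (A + 1)"] X A B0 by simp
      moreover have "(X / (A + 1)) * A \<le> X" using X A by (simp add: field_simps)
      moreover have "\<And>Y::real. X \<le> Y / 2 \<Longrightarrow> Y \<le> X \<Longrightarrow> False" using X by linarith
      ultimately show False by blast
    qed
  qed
qed

lemma CS_real:
  assumes "L2 f" "L2 g"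
  shows "(\<integral>x. cmod (f x) * cmod (g x) \<partial>lborel) \<le> sqrt (nrm2 f) * sqrt (nrm2 g)"
proof (rule sqrt_bound_lemma[OF nrm2_nonneg nrm2_nonneg])
  fix t :: real assume t: "t > 0"
  have "(\<integral>x. cmod (f x) * cmod (g x) \<partial>lborel) \<le> (\<integral>x. (t * (cmod (f x))\<^sup>2 + (cmod (g x))\<^sup>2 / t) / 2 \<partial>lborel)"
    using L2_int[OF assms(1)] L2_int[OF assms(2)] L2_prod_int_norm[OF assms]
    by (intro integral_mono amgm_t t) auto
  also have "\<dots> = (t * nrm2 f + nrm2 g / t) / 2"
    using L2_int[OF assms(1)] L2_int[OF assms(2)] by (simp add: nrm2_def)
  finally show "(\<integral>x. cmod (f x) * cmod (g x) \<partial>lborel) \<le> (t * nrm2 f + nrm2 g / t) / 2" .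
qed

lemma CS:
  assumes "L2 f" "L2 g"
  shows "cmod (\<integral>x. f x * g x \<partial>lborel) \<le> sqrt (nrm2 f) * sqrt (nrm2 g)"
proof -
  have "cmod (\<integral>x. f x * g x \<partial>lborel) \<le> (\<integral>x. cmod (f x * g x) \<partial>lborel)"
    by (rule integral_norm_bound)
  also have "\<dots> = (\<integral>x. cmod (f x) * cmod (g x) \<partial>lborel)" by (simp add: norm_mult)
  also have "\<dots> \<le> sqrt (nrm2 f) * sqrt (nrm2 g)" by (rule CS_real[OF assms])
  finally show ?thesis .
qed

lemma nrm2_diff_le:
  assumes "L2 f" "L2 g" "L2 h"
  shows "nrm2 (\<lambda>x. f x - h x) \<le> 2 * nrm2 (\<lambda>x. f x - g x) + 2 * nrm2 (\<lambda>x. g x - h x)"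
proof -
  have i1: "integrable lborel (\<lambda>x. (cmod (f x - h x))\<^sup>2)" by (rule L2_int, intro L2_diff assms)
  have i2: "integrable lborel (\<lambda>x. (cmod (f x - g x))\<^sup>2)" by (rule L2_int, intro L2_diff assms)
  have i3: "integrable lborel (\<lambda>x. (cmod (g x - h x))\<^sup>2)" by (rule L2_int, intro L2_diff assms)
  have "nrm2 (\<lambda>x. f x - h x) \<le> (\<integral>x. 2 * (cmod (f x - g x))\<^sup>2 + 2 * (cmod (g x - h x))\<^sup>2 \<partial>lborel)"
    unfolding nrm2_def
  proof (intro integral_mono i1)
    show "integrable lborel (\<lambda>x. 2 * (cmod (f x - g x))\<^sup>2 + 2 * (cmod (g x - h x))\<^sup>2)" using i2 i3 by simp
    fix x
    have "cmod (f x - h x) \<le> cmod (f x - g x) + cmod (g x - h x)"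
      using norm_triangle_ineq[of "f x - g x" "g x - h x"] by simp
    then have "(cmod (f x - h x))\<^sup>2 \<le> (cmod (f x - g x) + cmod (g x - h x))\<^sup>2"
      by (intro power_mono) auto
    also have "\<dots> \<le> 2 * (cmod (f x - g x))\<^sup>2 + 2 * (cmod (g x - h x))\<^sup>2"
      using amgm2[of "cmod (f x - g x)" "cmod (g x - h x)"] by (simp add: power2_sum)
    finally show "(cmod (f x - h x))\<^sup>2 \<le> 2 * (cmod (f x - g x))\<^sup>2 + 2 * (cmod (g x - h x))\<^sup>2" .
  qed
  also have "\<dots> = 2 * nrm2 (\<lambda>x. f x - g x) + 2 * nrm2 (\<lambda>x. g x - h x)"
    using i2 i3 by (simp add: nrm2_def)
  finally show ?thesis .
qed

lemma pair_tendsto: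
  assumes "L2 \<phi>" "L2 F" "\<And>n. L2 (Fn n)" "(\<lambda>n. nrm2 (\<lambda>x. Fn n x - F x)) \<longlonglongrightarrow> 0"
  shows "(\<lambda>n. \<integral>x. Fn n x * \<phi> x \<partial>lborel) \<longlonglongrightarrow> (\<integral>x. F x * \<phi> x \<partial>lborel)"
proof -
  have "(\<lambda>n. sqrt (nrm2 (\<lambda>x. Fn n x - F x)) * sqrt (nrm2 \<phi>)) \<longlonglongrightarrow> sqrt 0 * sqrt (nrm2 \<phi>)"
    by (intro tendsto_intros assms)
  then have lim0: "(\<lambda>n. sqrt (nrm2 (\<lambda>x. Fn n x - F x)) * sqrt (nrm2 \<phi>)) \<longlonglongrightarrow> 0" by simp
  have "(\<lambda>n. (\<integral>x. Fn n x * \<phi> x \<partial>lborel) - (\<integral>x. F x * \<phi> x \<partial>lborel)) \<longlonglongrightarrow> 0"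
  proof (rule Lim_null_comparison[OF _ lim0])
    show "\<forall>\<^sub>F n in sequentially. norm ((\<integral>x. Fn n x * \<phi> x \<partial>lborel) - (\<integral>x. F x * \<phi> x \<partial>lborel)) \<le> sqrt (nrm2 (\<lambda>x. Fn n x - F x)) * sqrt (nrm2 \<phi>)"
    proof (intro always_eventually allI)
      fix n
      have "(\<integral>x. Fn n x * \<phi> x \<partial>lborel) - (\<integral>x. F x * \<phi> x \<partial>lborel) = (\<integral>x. (Fn n x - F x) * \<phi> x \<partial>lborel)"
        using L2_prod_int[OF assms(3)[of n] assms(1)] L2_prod_int[OF assms(2) assms(1)]
        by (simp add: left_diff_distrib)
      also have "cmod \<dots> \<le> sqrt (nrm2 (\<lambda>x. Fn n x - F x)) * sqrt (nrm2 \<phi>)"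
        by (rule CS) (intro L2_diff assms)+
      finally show "norm ((\<integral>x. Fn n x * \<phi> x \<partial>lborel) - (\<integral>x. F x * \<phi> x \<partial>lborel)) \<le> sqrt (nrm2 (\<lambda>x. Fn n x - F x)) * sqrt (nrm2 \<phi>)" .
    qed
  qed
  then show ?thesis by (simp add: LIM_zero_iff)
qed

lemma nrm2_AE_cong:
  assumes "AE x in lborel. f x = g x" "f \<in> borel_measurable lborel" "g \<in> borel_measurable lborel"
  shows "nrm2 f = nrm2 g"
  unfolding nrm2_def by (rule integral_cong_AE) (use assms in \<open>auto\<close>)

lemma nn_nrm2:
  assumes "L2 h" shows "(\<integral>\<^sup>+x. ennreal ((cmod (h x))\<^sup>2) \<partial>lborel) = ennreal (nrm2 h)"
  unfolding nrm2_def using L2_int[OF assms] by (intro nn_integral_eq_integral) auto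

lemma nn_to_L2:
  assumes [measurable]: "h \<in> borel_measurable lborel"
    and le: "(\<integral>\<^sup>+x. ennreal ((cmod (h x))\<^sup>2) \<partial>lborel) \<le> ennreal c" and c: "c \<ge> 0"
  shows "L2 h \<and> nrm2 h \<le> c"
proof -
  define X where "X = (\<integral>\<^sup>+x. ennreal ((cmod (h x))\<^sup>2) \<partial>lborel)"
  have "X < top" using le ennreal_less_top[of c] unfolding X_def by (rule le_less_trans)
  then have "X \<noteq> \<infinity>" by simp
  then obtain r where r: "X = ennreal r" "r \<ge> 0" by (cases X) auto
  have int: "integrable lborel (\<lambda>x. (cmod (h x))\<^sup>2)"
    by (rule integrableI_nn_integral_finite[where x=r]) (use r in \<open>auto simp: X_def\<close>)
  have L: "L2 h" using int by (simp add: L2_def)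
  have "ennreal (nrm2 h) \<le> ennreal c" using nn_nrm2[OF L] le by simp
  then show ?thesis using L c by simp
qed

lemma RF:
  fixes F :: "nat \<Rightarrow> real \<Rightarrow> complex"
  assumes L: "\<And>n. L2 (F n)"
    and C: "\<And>e. e > 0 \<Longrightarrow> \<exists>N. \<forall>m\<ge>N. \<forall>n\<ge>N. nrm2 (\<lambda>x. F m x - F n x) < e"
  shows "\<exists>G. L2 G \<and> (\<lambda>n. nrm2 (\<lambda>x. F n x - G x)) \<longlonglongrightarrow> 0 \<and> (\<forall>B. (\<forall>n. nrm2 (F n) \<le> B) \<longrightarrow> nrm2 G \<le> B)"
proof -
  have Fm[measurable]: "\<And>n. F n \<in> borel_measurable lborel" using L by (simp add: L2_def)
  obtain N :: "real \<Rightarrow> nat" where N: "\<And>e m n. e > 0 \<Longrightarrow> m \<ge> N e \<Longrightarrow> n \<ge> N e \<Longrightarrow> nrm2 (\<lambda>x. F m x - F n x) < e"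
    using C by metis
  define r where "r k = (\<Sum>j\<le>k. N ((1/8)^j)) + k" for k
  have rN: "r k \<ge> N ((1/8)^k)" for k
  proof -
    have "N ((1/8)^k) \<le> (\<Sum>j\<le>k. N ((1/8)^j))" by (rule member_le_sum) auto
    then show ?thesis by (simp add: r_def)
  qed
  have rSuc: "r (Suc k) = r k + N ((1/8)^(Suc k)) + 1" for k by (simp add: r_def)
  have rmono: "r k \<le> r (Suc k)" for k using rSuc[of k] by simp
  have rge: "r k \<ge> k" for k by (simp add: r_def)
  define d where "d k x = F (r (Suc k)) x - F (r k) x" for k x
  have dL: "L2 (d k)" for k unfolding d_def by (intro L2_diff L)
  have dm[measurable]: "d k \<in> borel_measurable lborel" for k using dL[of k] by (simp add: L2_def)
  have dn: "nrm2 (d k) < (1/8)^k" for k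
    unfolding d_def by (rule N) (use rN[of k] rmono[of k] in auto)
  define S where "S x = (\<Sum>k. ennreal (2^k * (cmod (d k x))\<^sup>2))" for x
  have Sm[measurable]: "S \<in> borel_measurable lborel" unfolding S_def by measurable
  have "(\<integral>\<^sup>+x. S x \<partial>lborel) = (\<Sum>k. \<integral>\<^sup>+x. ennreal (2^k * (cmod (d k x))\<^sup>2) \<partial>lborel)"
    unfolding S_def by (rule nn_integral_suminf) measurable
  also have "\<dots> \<le> (\<Sum>k. ennreal ((1/4)^k))"
  proof (intro suminf_le allI)
    fix k :: nat
    have "(\<integral>\<^sup>+x. ennreal (2^k * (cmod (d k x))\<^sup>2) \<partial>lborel) = ennreal (2^k) * (\<integral>\<^sup>+x. ennreal ((cmod (d k x))\<^sup>2) \<partial>lborel)"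
      by (subst nn_integral_cmult[symmetric]) (auto simp: ennreal_mult)
    also have "\<dots> = ennreal (2^k * nrm2 (d k))" by (simp add: nn_nrm2[OF dL] ennreal_mult nrm2_nonneg)
    also have "\<dots> \<le> ennreal ((1/4)^k)"
    proof (intro ennreal_leI)
      have "2^k * nrm2 (d k) \<le> 2^k * (1/8)^k" using dn[of k] by (intro mult_left_mono) auto
      also have "(2::real)^k * (1/8)^k = (1/4)^k" by (simp add: power_mult_distrib[symmetric])
      finally show "2^k * nrm2 (d k) \<le> (1/4)^k" .
    qed
    finally show "(\<integral>\<^sup>+x. ennreal (2^k * (cmod (d k x))\<^sup>2) \<partial>lborel) \<le> ennreal ((1/4)^k)" .
  qed auto
  also have "\<dots> = ennreal (\<Sum>k. (1/4::real)^k)" by (rule suminf_ennreal2) auto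
  finally have "(\<integral>\<^sup>+x. S x \<partial>lborel) < top" using ennreal_less_top by (rule le_less_trans)
  then have "(\<integral>\<^sup>+x. S x \<partial>lborel) \<noteq> \<infinity>" by simp
  then have AES: "AE x in lborel. S x \<noteq> \<infinity>" by (intro nn_integral_PInf_AE) auto
  have conv: "(\<lambda>k. F (r k) x) \<longlonglongrightarrow> F (r 0) x + (\<Sum>j. d j x)" if Sx: "S x \<noteq> \<infinity>" for x
  proof -
    have s1: "summable (\<lambda>k. 2^k * (cmod (d k x))\<^sup>2)"
      by (rule summable_suminf_not_top) (use Sx in \<open>auto simp: S_def\<close>)
    have s2: "summable (\<lambda>k. (2^k * (cmod (d k x))\<^sup>2 + (1/2::real)^k) / 2)"
      by (intro summable_divide summable_add s1 summable_geometric) auto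
    have "summable (\<lambda>k. norm (d k x))"
    proof (rule summable_comparison_test'[OF s2])
      fix k :: nat
      have "cmod (d k x) * 1 \<le> (2^k * (cmod (d k x))\<^sup>2 + 1\<^sup>2 / 2^k) / 2"
        by (rule amgm_t) auto
      then show "norm (norm (d k x)) \<le> (2^k * (cmod (d k x))\<^sup>2 + (1/2::real)^k) / 2"
        by (simp add: power_one_over)
    qed
    then have "summable (\<lambda>k. d k x)" by (rule summable_norm_cancel)
    then have "(\<lambda>k. \<Sum>j<k. d j x) \<longlonglongrightarrow> (\<Sum>j. d j x)" by (rule summable_LIMSEQ)
    then have "(\<lambda>k. F (r 0) x + (\<Sum>j<k. d j x)) \<longlonglongrightarrow> F (r 0) x + (\<Sum>j. d j x)" by (intro tendsto_intros)
    moreover have "F (r 0) x + (\<Sum>j<k. d j x) = F (r k) x" for k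
      unfolding d_def using sum_lessThan_telescope[of "\<lambda>j. F (r j) x" k] by simp
    ultimately show ?thesis by simp
  qed
  define G where "G x = (if S x \<noteq> \<infinity> then F (r 0) x + (\<Sum>j. d j x) else 0)" for x
  have Gm[measurable]: "G \<in> borel_measurable lborel"
  proof (rule borel_measurable_LIMSEQ_metric[where f="\<lambda>k x. if S x \<noteq> \<infinity> then F (r k) x else 0"])
    fix x show "(\<lambda>k. if S x \<noteq> \<infinity> then F (r k) x else 0) \<longlonglongrightarrow> G x"
      using conv[of x] by (cases "S x \<noteq> \<infinity>") (auto simp: G_def)
  qed measurable
  have convG: "AE x in lborel. (\<lambda>k. F (r k) x) \<longlonglongrightarrow> G x"
    using AES by eventually_elim (use conv in \<open>auto simp: G_def\<close>)
  have fatou: "(\<integral>\<^sup>+x. ennreal ((cmod (G x - H x))\<^sup>2) \<partial>lborel) \<le> ennreal c"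
    if HL: "H \<in> borel_measurable lborel" and ev: "\<forall>\<^sub>F k in sequentially. L2 (\<lambda>x. F (r k) x - H x) \<and> nrm2 (\<lambda>x. F (r k) x - H x) \<le> c"
    for H :: "real \<Rightarrow> complex" and c :: real
  proof -
    have [measurable]: "H \<in> borel_measurable lborel" by fact
    have "(\<integral>\<^sup>+x. ennreal ((cmod (G x - H x))\<^sup>2) \<partial>lborel) = (\<integral>\<^sup>+x. liminf (\<lambda>k. ennreal ((cmod (F (r k) x - H x))\<^sup>2)) \<partial>lborel)"
    proof (rule nn_integral_cong_AE)
      show "AE x in lborel. ennreal ((cmod (G x - H x))\<^sup>2) = liminf (\<lambda>k. ennreal ((cmod (F (r k) x - H x))\<^sup>2))"
        using convG
      proof eventually_elim
        case (elim x)
        have t: "(\<lambda>k. ennreal ((cmod (F (r k) x - H x))\<^sup>2)) \<longlonglongrightarrow> ennreal ((cmod (G x - H x))\<^sup>2)"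
          by (intro tendsto_intros elim)
        show ?case using lim_imp_Liminf[OF sequentially_bot t] by (rule sym)
      qed
    qed
    also have "\<dots> \<le> liminf (\<lambda>k. \<integral>\<^sup>+x. ennreal ((cmod (F (r k) x - H x))\<^sup>2) \<partial>lborel)"
      by (rule nn_integral_liminf) measurable
    also have "\<dots> \<le> limsup (\<lambda>k. \<integral>\<^sup>+x. ennreal ((cmod (F (r k) x - H x))\<^sup>2) \<partial>lborel)"
      by (rule Liminf_le_Limsup) simp
    also have "\<dots> \<le> ennreal c"
    proof (rule Limsup_bounded)
      show "\<forall>\<^sub>F k in sequentially. (\<integral>\<^sup>+x. ennreal ((cmod (F (r k) x - H x))\<^sup>2) \<partial>lborel) \<le> ennreal c"
        using ev by eventually_elim (auto simp add: nn_nrm2 intro: ennreal_leI)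
    qed
    finally show ?thesis .
  qed
  have near: "L2 (\<lambda>x. F n x - G x) \<and> nrm2 (\<lambda>x. F n x - G x) \<le> e" if e: "e > 0" and n: "n \<ge> N e" for e n
  proof -
    have "(\<integral>\<^sup>+x. ennreal ((cmod (G x - F n x))\<^sup>2) \<partial>lborel) \<le> ennreal e"
    proof (rule fatou)
      show "\<forall>\<^sub>F k in sequentially. L2 (\<lambda>x. F (r k) x - F n x) \<and> nrm2 (\<lambda>x. F (r k) x - F n x) \<le> e"
      proof (rule eventually_sequentiallyI[of "N e"])
        fix k assume "N e \<le> k"
        then have "r k \<ge> N e" using rge[of k] by linarith
        then show "L2 (\<lambda>x. F (r k) x - F n x) \<and> nrm2 (\<lambda>x. F (r k) x - F n x) \<le> e"
          using N[OF e _ n, of "r k"] by (auto intro!: L2_diff L)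
      qed
    qed measurable
    then have "L2 (\<lambda>x. F n x - G x) \<and> nrm2 (\<lambda>x. F n x - G x) \<le> e"
      by (intro nn_to_L2) (auto simp: norm_minus_commute e less_imp_le)
    then show ?thesis .
  qed
  have GL: "L2 G"
  proof -
    have "L2 (\<lambda>x. F (N 1) x - G x)" using near[of 1 "N 1"] by simp
    then have "L2 (\<lambda>x. F (N 1) x - (F (N 1) x - G x))" by (rule L2_diff[OF L[of "N 1"]])
    moreover have "(\<lambda>x. F (N 1) x - (F (N 1) x - G x)) = G" by (rule ext) simp
    ultimately show ?thesis by simp
  qed
  have lim: "(\<lambda>n. nrm2 (\<lambda>x. F n x - G x)) \<longlonglongrightarrow> 0"
  proof (rule LIMSEQ_I)
    fix e :: real assume e: "e > 0"
    show "\<exists>no. \<forall>n\<ge>no. norm (nrm2 (\<lambda>x. F n x - G x) - 0) < e"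
    proof (intro exI allI impI)
      fix n assume "n \<ge> N (e/2)"
      then have "nrm2 (\<lambda>x. F n x - G x) \<le> e/2" using near[of "e/2" n] e by simp
      then show "norm (nrm2 (\<lambda>x. F n x - G x) - 0) < e" using e nrm2_nonneg by simp
    qed
  qed
  have bound: "nrm2 G \<le> B" if B: "\<forall>n. nrm2 (F n) \<le> B" for B
  proof -
    have B0: "B \<ge> 0" using B nrm2_nonneg order_trans by blast
    have "(\<integral>\<^sup>+x. ennreal ((cmod (G x - 0))\<^sup>2) \<partial>lborel) \<le> ennreal B"
      by (rule fatou) (use B L in auto)
    then show ?thesis using nn_to_L2[of G B] B0 by simp
  qed
  show ?thesis using GL lim bound by blast
qed

lemma cexp_norm_1[simp]: "cmod (exp (- \<i> * complex_of_real t)) = 1"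
  by (simp add: norm_exp)

lemma integrable_pair_mult:
  fixes a b :: "real \<Rightarrow> real"
  assumes a: "integrable lborel a" and b: "integrable lborel b"
  shows "integrable (lborel \<Otimes>\<^sub>M lborel) (\<lambda>(x, y). a x * b y)"
proof (rule lborel_pair.Fubini_integrable)
  have [measurable]: "a \<in> borel_measurable lborel" "b \<in> borel_measurable lborel" using a b by auto
  show "(\<lambda>(x, y). a x * b y) \<in> borel_measurable (lborel \<Otimes>\<^sub>M lborel)" by measurable
  show "integrable lborel (\<lambda>x. \<integral>y. norm (case (x, y) of (x, y) \<Rightarrow> a x * b y) \<partial>lborel)"
    using a by (simp add: abs_mult integrable_abs)
  show "AE x in lborel. integrable lborel (\<lambda>y. case (x, y) of (x, y) \<Rightarrow> a x * b y)"
    using b by simp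
qed

lemma integrable_pair_bound:
  fixes F :: "real \<times> real \<Rightarrow> complex"
  assumes a: "integrable lborel a" and b: "integrable lborel b"
    and Fm: "F \<in> borel_measurable (lborel \<Otimes>\<^sub>M lborel)"
    and bd: "\<And>x y. cmod (F (x, y)) \<le> cmod (a x) * cmod (b y)"
  shows "integrable (lborel \<Otimes>\<^sub>M lborel) F"
proof (rule Bochner_Integration.integrable_bound)
  show "integrable (lborel \<Otimes>\<^sub>M lborel) (\<lambda>(x, y). cmod (a x) * cmod (b y))"
    by (rule integrable_pair_mult) (use a b in auto)
  show "F \<in> borel_measurable (lborel \<Otimes>\<^sub>M lborel)" by fact
  show "AE z in lborel \<Otimes>\<^sub>M lborel. norm (F z) \<le> norm (case z of (x, y) \<Rightarrow> cmod (a x) * cmod (b y))"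
    using bd by (auto split: prod.splits)
qed

lemma FT1_meas[measurable]:
  assumes "integrable lborel h" shows "FT1 h \<in> borel_measurable borel"
proof -
  have [measurable]: "h \<in> borel_measurable lborel" using assms by auto
  have "(\<lambda>\<xi>. \<integral>x. h x * exp (- \<i> * complex_of_real (x * \<xi>)) \<partial>lborel) \<in> borel_measurable lborel"
    by measurable
  then show ?thesis unfolding FT1_def[abs_def] by simp
qed

lemma FT1_bound: "cmod (FT1 h \<xi>) \<le> (\<integral>x. cmod (h x) \<partial>lborel)"
  unfolding FT1_def
  using integral_norm_bound[of lborel "\<lambda>x. h x * exp (- \<i> * complex_of_real (x * \<xi>))"]
  by (simp add: norm_mult)

lemma FT1_integrand_int:
  assumes "integrable lborel h" shows "integrable lborel (\<lambda>x. h x * exp (- \<i> * complex_of_real (x * \<xi>)))"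
proof (rule Bochner_Integration.integrable_bound[OF integrable_norm[OF assms]])
  have [measurable]: "h \<in> borel_measurable lborel" using assms by auto
  show "(\<lambda>x. h x * exp (- \<i> * complex_of_real (x * \<xi>))) \<in> borel_measurable lborel" by measurable
qed (auto simp: norm_mult)

lemma FT1_diff:
  assumes "integrable lborel h" "integrable lborel g"
  shows "FT1 (\<lambda>x. h x - g x) \<xi> = FT1 h \<xi> - FT1 g \<xi>"
  unfolding FT1_def using FT1_integrand_int[OF assms(1)] FT1_integrand_int[OF assms(2)]
  by (simp add: left_diff_distrib)

lemma FT1_cmult:
  shows "FT1 (\<lambda>x. c * h x) \<xi> = c * FT1 h \<xi>"
  unfolding FT1_def by (simp add: mult.assoc)

lemma FT1_swap:
  assumes h: "integrable lborel h" and p: "integrable lborel \<phi>"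
  shows "(\<integral>x. h x * FT1 \<phi> x \<partial>lborel) = (\<integral>\<xi>. FT1 h \<xi> * \<phi> \<xi> \<partial>lborel)"
proof -
  have [measurable]: "h \<in> borel_measurable lborel" "\<phi> \<in> borel_measurable lborel" using h p by auto
  define f where "f x y = h x * \<phi> y * exp (- \<i> * complex_of_real (x * y))" for x y
  have int: "integrable (lborel \<Otimes>\<^sub>M lborel) (case_prod f)"
  proof (rule integrable_pair_bound[OF h p])
    show "case_prod f \<in> borel_measurable (lborel \<Otimes>\<^sub>M lborel)" unfolding f_def by measurable
  qed (simp add: f_def norm_mult)
  have "(\<integral>x. h x * FT1 \<phi> x \<partial>lborel) = (\<integral>x. (\<integral>y. f x y \<partial>lborel) \<partial>lborel)"
    unfolding FT1_def f_def
    by (intro Bochner_Integration.integral_cong refl) (simp add: integral_mult_right_zero[symmetric] mult_ac)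
  also have "\<dots> = (\<integral>y. (\<integral>x. f x y \<partial>lborel) \<partial>lborel)"
    by (rule lborel_pair.Fubini_integral[OF int, symmetric])
  also have "\<dots> = (\<integral>\<xi>. FT1 h \<xi> * \<phi> \<xi> \<partial>lborel)"
    unfolding FT1_def f_def
    by (intro Bochner_Integration.integral_cong refl) (simp add: integral_mult_left_zero[symmetric] mult_ac)
  finally show ?thesis .
qed

lemma gauss_integral:
  fixes e x :: real assumes e: "e > 0"
  shows "integrable lborel (\<lambda>u. exp (- (x - u)\<^sup>2 / (4*e)))"
    and "(\<integral>u. exp (- (x - u)\<^sup>2 / (4*e)) \<partial>lborel) = sqrt (4 * pi * e)"
proof -
  have eq: "(\<lambda>u. exp (- (x - u)\<^sup>2 / (4*e))) = (\<lambda>u. exp (- (1/(4*e)) * (u - x)\<^sup>2))"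
    by (rule ext) (simp add: power2_commute)
  show "integrable lborel (\<lambda>u. exp (- (x - u)\<^sup>2 / (4*e)))"
    unfolding eq by (rule integrable_gauss) (use e in simp)
  have "FT1 (\<lambda>u. complex_of_real (exp (- (1/(4*e)) * (u - x)\<^sup>2))) 0
      = exp (- \<i> * complex_of_real (0 * x)) * complex_of_real (sqrt (pi / (1/(4*e))) * exp (- 0\<^sup>2 / (4 * (1/(4*e)))))"
    by (rule GFT) (use e in simp)
  then have "complex_of_real (\<integral>u. exp (- (1/(4*e)) * (u - x)\<^sup>2) \<partial>lborel) = complex_of_real (sqrt (4 * pi * e))"
    by (simp add: FT1_def mult.commute)
  then show "(\<integral>u. exp (- (x - u)\<^sup>2 / (4*e)) \<partial>lborel) = sqrt (4 * pi * e)"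
    unfolding eq of_real_eq_iff .
qed

definition Kf :: "real \<Rightarrow> real \<Rightarrow> real" where
  "Kf e u = sqrt (pi / e) * exp (- u\<^sup>2 / (4*e))"

lemma Kf_nonneg: "e > 0 \<Longrightarrow> Kf e u \<ge> 0" by (simp add: Kf_def)

lemma Kf_int:
  assumes e: "e > 0"
  shows "integrable lborel (\<lambda>u. Kf e (x - u))" "(\<integral>u. Kf e (x - u) \<partial>lborel) = 2 * pi"
    "integrable lborel (\<lambda>u. Kf e (u - x))" "(\<integral>u. Kf e (u - x) \<partial>lborel) = 2 * pi"
proof -
  have s: "sqrt (pi / e) * sqrt (4 * pi * e) = 2 * pi"
  proof -
    have "sqrt (pi / e) * sqrt (4 * pi * e) = sqrt (4 * pi * pi)"
      using e by (simp add: real_sqrt_mult[symmetric])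
    also have "4 * pi * pi = (2 * pi)\<^sup>2" by (simp add: power2_eq_square)
    also have "sqrt ((2 * pi)\<^sup>2) = 2 * pi" by (rule real_sqrt_unique) auto
    finally show ?thesis .
  qed
  show i1: "integrable lborel (\<lambda>u. Kf e (x - u))" unfolding Kf_def using gauss_integral(1)[OF e] by simp
  show i2: "(\<integral>u. Kf e (x - u) \<partial>lborel) = 2 * pi" unfolding Kf_def using gauss_integral(2)[OF e] s by simp
  have eq: "(\<lambda>u. Kf e (u - x)) = (\<lambda>u. Kf e (x - u))" by (rule ext) (simp add: Kf_def power2_commute)
  show "integrable lborel (\<lambda>u. Kf e (u - x))" by (subst eq) (rule i1)
  show "(\<integral>u. Kf e (u - x) \<partial>lborel) = 2 * pi" by (subst eq) (rule i2)
qed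

lemma FT_gauss_K:
  assumes e: "e > 0"
  shows "FT1 (\<lambda>\<xi>. complex_of_real (exp (- e * \<xi>\<^sup>2))) u = complex_of_real (Kf e u)"
  using GFT[OF e, of 0 u] by (simp add: Kf_def)


lemma (in pair_sigma_finite) integrable_mult_pair:
  fixes a :: "'a \<Rightarrow> real" and b :: "'b \<Rightarrow> real"
  assumes a: "integrable M1 a" and b: "integrable M2 b"
  shows "integrable (M1 \<Otimes>\<^sub>M M2) (\<lambda>(x, y). a x * b y)"
proof (rule Fubini_integrable)
  have [measurable]: "a \<in> borel_measurable M1" "b \<in> borel_measurable M2" using a b by auto
  show "(\<lambda>(x, y). a x * b y) \<in> borel_measurable (M1 \<Otimes>\<^sub>M M2)" by measurable
  show "integrable M1 (\<lambda>x. \<integral>y. norm (case (x, y) of (x, y) \<Rightarrow> a x * b y) \<partial>M2)"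
    using a by (simp add: abs_mult integrable_abs)
  show "AE x in M1. integrable M2 (\<lambda>y. case (x, y) of (x, y) \<Rightarrow> a x * b y)"
    using b by simp
qed

lemma conv_K_int:
  assumes L: "L2 hh" and e: "e > 0"
  shows "integrable (lborel \<Otimes>\<^sub>M lborel) (\<lambda>(x, y). (cmod (hh x))\<^sup>2 * Kf e (x - y))"
    "(\<integral>(x, y). (cmod (hh x))\<^sup>2 * Kf e (x - y) \<partial>(lborel \<Otimes>\<^sub>M lborel)) = 2 * pi * nrm2 hh"
    "integrable (lborel \<Otimes>\<^sub>M lborel) (\<lambda>(x, y). (cmod (hh x))\<^sup>2 * Kf e (y - x))"
    "(\<integral>(x, y). (cmod (hh x))\<^sup>2 * Kf e (y - x) \<partial>(lborel \<Otimes>\<^sub>M lborel)) = 2 * pi * nrm2 hh"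
proof -
  have [measurable]: "hh \<in> borel_measurable lborel" using L by (simp add: L2_def)
  have Km[measurable]: "Kf e \<in> borel_measurable borel" unfolding Kf_def[abs_def] by measurable
  have hi: "integrable lborel (\<lambda>x. (cmod (hh x))\<^sup>2)" by (rule L2_int[OF L])
  show i1: "integrable (lborel \<Otimes>\<^sub>M lborel) (\<lambda>(x, y). (cmod (hh x))\<^sup>2 * Kf e (x - y))"
  proof (rule lborel_pair.Fubini_integrable)
    show "(\<lambda>(x, y). (cmod (hh x))\<^sup>2 * Kf e (x - y)) \<in> borel_measurable (lborel \<Otimes>\<^sub>M lborel)" by measurable
    have "(\<lambda>x. \<integral>y. norm (case (x, y) of (x, y) \<Rightarrow> (cmod (hh x))\<^sup>2 * Kf e (x - y)) \<partial>lborel)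
        = (\<lambda>x. 2 * pi * (cmod (hh x))\<^sup>2)"
      using Kf_nonneg[OF e] Kf_int[OF e] by (simp add: abs_mult mult.commute)
    then show "integrable lborel (\<lambda>x. \<integral>y. norm (case (x, y) of (x, y) \<Rightarrow> (cmod (hh x))\<^sup>2 * Kf e (x - y)) \<partial>lborel)"
      using hi by simp
    show "AE x in lborel. integrable lborel (\<lambda>y. case (x, y) of (x, y) \<Rightarrow> (cmod (hh x))\<^sup>2 * Kf e (x - y))"
      using Kf_int[OF e] by simp
  qed
  show "(\<integral>(x, y). (cmod (hh x))\<^sup>2 * Kf e (x - y) \<partial>(lborel \<Otimes>\<^sub>M lborel)) = 2 * pi * nrm2 hh"
    using lborel_pair.integral_fst[of "\<lambda>x y. (cmod (hh x))\<^sup>2 * Kf e (x - y)", OF i1, symmetric] Kf_int[OF e]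
    by (simp add: nrm2_def)
  show i3: "integrable (lborel \<Otimes>\<^sub>M lborel) (\<lambda>(x, y). (cmod (hh x))\<^sup>2 * Kf e (y - x))"
  proof (rule lborel_pair.Fubini_integrable)
    show "(\<lambda>(x, y). (cmod (hh x))\<^sup>2 * Kf e (y - x)) \<in> borel_measurable (lborel \<Otimes>\<^sub>M lborel)" by measurable
    have "(\<lambda>x. \<integral>y. norm (case (x, y) of (x, y) \<Rightarrow> (cmod (hh x))\<^sup>2 * Kf e (y - x)) \<partial>lborel)
        = (\<lambda>x. 2 * pi * (cmod (hh x))\<^sup>2)"
      using Kf_nonneg[OF e] Kf_int[OF e] by (simp add: abs_mult mult.commute)
    then show "integrable lborel (\<lambda>x. \<integral>y. norm (case (x, y) of (x, y) \<Rightarrow> (cmod (hh x))\<^sup>2 * Kf e (y - x)) \<partial>lborel)"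
      using hi by simp
    show "AE x in lborel. integrable lborel (\<lambda>y. case (x, y) of (x, y) \<Rightarrow> (cmod (hh x))\<^sup>2 * Kf e (y - x))"
      using Kf_int[OF e] by simp
  qed
  show "(\<integral>(x, y). (cmod (hh x))\<^sup>2 * Kf e (y - x) \<partial>(lborel \<Otimes>\<^sub>M lborel)) = 2 * pi * nrm2 hh"
    using lborel_pair.integral_fst[of "\<lambda>x y. (cmod (hh x))\<^sup>2 * Kf e (y - x)", OF i3, symmetric] Kf_int[OF e]
    by (simp add: nrm2_def)
qed


lemma borel_measurable_cnj'[measurable (raw)]:
  fixes f :: "'a \<Rightarrow> complex"
  shows "f \<in> borel_measurable M \<Longrightarrow> (\<lambda>x. cnj (f x)) \<in> borel_measurable M"
  by (rule borel_measurable_continuous_on[where f=cnj]) (auto intro: continuous_intros)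

lemma cnj_FT1:
  "cnj (FT1 hh \<xi>) = (\<integral>y. cnj (hh y) * exp (\<i> * complex_of_real (y * \<xi>)) \<partial>lborel)"
proof -
  have "cnj (FT1 hh \<xi>) = (\<integral>y. cnj (hh y * exp (- \<i> * complex_of_real (y * \<xi>))) \<partial>lborel)"
    unfolding FT1_def by (simp only: Bochner_Integration.integral_cnj)
  also have "\<dots> = (\<integral>y. cnj (hh y) * exp (\<i> * complex_of_real (y * \<xi>)) \<partial>lborel)"
    by (simp add: exp_cnj)
  finally show ?thesis .
qed

lemma bessel_eps:
  assumes h: "integrable lborel hh" and L: "L2 hh" and e: "e > 0"
  shows "(\<integral>\<xi>. (cmod (FT1 hh \<xi>))\<^sup>2 * exp (- e * \<xi>\<^sup>2) \<partial>lborel) \<le> 2 * pi * nrm2 hh"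
proof -
  have hm[measurable]: "hh \<in> borel_measurable lborel" using h by auto
  let ?M = "lborel \<Otimes>\<^sub>M lborel :: (real \<times> real) measure"
  interpret T: pair_sigma_finite ?M "lborel :: real measure"
    unfolding pair_sigma_finite_def
    using sigma_finite_pair_measure lborel.sigma_finite_measure_axioms by blast
  define E where "E \<xi> = complex_of_real (exp (- e * \<xi>\<^sup>2))" for \<xi>
  have Em[measurable]: "E \<in> borel_measurable borel" unfolding E_def[abs_def] by measurable
  have Eb: "cmod (E \<xi>) \<le> 1" for \<xi> unfolding E_def using e by simp
  define g where "g z \<xi> = hh (fst z) * cnj (hh (snd z)) * (exp (- \<i> * complex_of_real ((fst z - snd z) * \<xi>)) * E \<xi>)" for z \<xi>
  have ab: "integrable ?M (\<lambda>(x, y). cmod (hh x) * cmod (hh y))"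
    by (rule integrable_pair_mult) (use h in auto)
  have Eint: "integrable lborel (\<lambda>\<xi>. exp (- e * \<xi>\<^sup>2))" using integrable_gauss[OF e, of 0] by simp
  have gint: "integrable (?M \<Otimes>\<^sub>M lborel) (case_prod g)"
  proof (rule Bochner_Integration.integrable_bound)
    show "integrable (?M \<Otimes>\<^sub>M lborel) (\<lambda>(z, \<xi>). (case z of (x, y) \<Rightarrow> cmod (hh x) * cmod (hh y)) * exp (- e * \<xi>\<^sup>2))"
      by (rule T.integrable_mult_pair[OF ab Eint])
    show "case_prod g \<in> borel_measurable (?M \<Otimes>\<^sub>M lborel)" unfolding g_def by measurable
    show "AE w in ?M \<Otimes>\<^sub>M lborel. norm (case_prod g w) \<le> norm ((\<lambda>(z, \<xi>). (case z of (x, y) \<Rightarrow> cmod (hh x) * cmod (hh y)) * exp (- e * \<xi>\<^sup>2)) w)"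
      by (auto simp: g_def E_def norm_mult split: prod.splits)
  qed
  have inner1: "(\<integral>z. g z \<xi> \<partial>?M) = complex_of_real ((cmod (FT1 hh \<xi>))\<^sup>2 * exp (- e * \<xi>\<^sup>2))" for \<xi>
  proof -
    have gi: "integrable ?M (\<lambda>(x, y). g (x, y) \<xi>)"
    proof (rule integrable_pair_bound[OF h h])
      show "(\<lambda>(x, y). g (x, y) \<xi>) \<in> borel_measurable ?M" unfolding g_def by measurable
      fix x y
      have "cmod (g (x, y) \<xi>) = cmod (hh x) * cmod (hh y) * cmod (E \<xi>)" by (simp add: g_def norm_mult)
      also have "\<dots> \<le> cmod (hh x) * cmod (hh y) * 1" by (intro mult_left_mono Eb) auto
      finally show "cmod (case (x, y) of (x, y) \<Rightarrow> g (x, y) \<xi>) \<le> cmod (hh x) * cmod (hh y)" by simp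
    qed
    have "(\<integral>z. g z \<xi> \<partial>?M) = (\<integral>x. \<integral>y. g (x, y) \<xi> \<partial>lborel \<partial>lborel)"
      using lborel_pair.integral_fst[of "\<lambda>x y. g (x, y) \<xi>", OF gi] by (simp add: split_beta')
    also have "\<dots> = (\<integral>x. (hh x * exp (- \<i> * complex_of_real (x * \<xi>)) * E \<xi>) * cnj (FT1 hh \<xi>) \<partial>lborel)"
    proof (rule Bochner_Integration.integral_cong[OF refl])
      fix x
      have pt: "g (x, y) \<xi> = (hh x * exp (- \<i> * complex_of_real (x * \<xi>)) * E \<xi>) * (cnj (hh y) * exp (\<i> * complex_of_real (y * \<xi>)))" for y
      proof -
        have "exp (- \<i> * complex_of_real ((x - y) * \<xi>)) = exp (- \<i> * complex_of_real (x * \<xi>)) * exp (\<i> * complex_of_real (y * \<xi>))"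
          by (subst exp_add[symmetric]) (rule arg_cong[where f=exp], simp add: algebra_simps)
        then show ?thesis by (simp add: g_def mult_ac)
      qed
      show "(\<integral>y. g (x, y) \<xi> \<partial>lborel) = (hh x * exp (- \<i> * complex_of_real (x * \<xi>)) * E \<xi>) * cnj (FT1 hh \<xi>)"
        unfolding pt cnj_FT1 by (rule integral_mult_right_zero)
    qed
    also have "\<dots> = E \<xi> * (FT1 hh \<xi> * cnj (FT1 hh \<xi>))"
      unfolding FT1_def by (simp add: integral_mult_left_zero[symmetric] mult_ac)
    also have "\<dots> = complex_of_real ((cmod (FT1 hh \<xi>))\<^sup>2 * exp (- e * \<xi>\<^sup>2))"
      by (simp add: E_def complex_norm_square[symmetric] mult.commute)
    finally show ?thesis .
  qed
  have inner2: "(\<integral>\<xi>. g z \<xi> \<partial>lborel) = hh (fst z) * cnj (hh (snd z)) * complex_of_real (Kf e (fst z - snd z))" for z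
  proof -
    have "(\<integral>\<xi>. g z \<xi> \<partial>lborel) = hh (fst z) * cnj (hh (snd z)) * (\<integral>\<xi>. complex_of_real (exp (- e * \<xi>\<^sup>2)) * exp (- \<i> * complex_of_real (\<xi> * (fst z - snd z))) \<partial>lborel)"
      unfolding g_def E_def by (simp add: mult_ac)
    also have "(\<integral>\<xi>. complex_of_real (exp (- e * \<xi>\<^sup>2)) * exp (- \<i> * complex_of_real (\<xi> * (fst z - snd z))) \<partial>lborel)
        = complex_of_real (Kf e (fst z - snd z))"
      using FT_gauss_K[OF e, of "fst z - snd z"] by (simp add: FT1_def)
    finally show ?thesis .
  qed
  define P where "P = (\<integral>\<xi>. (cmod (FT1 hh \<xi>))\<^sup>2 * exp (- e * \<xi>\<^sup>2) \<partial>lborel)"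
  have "complex_of_real P = (\<integral>\<xi>. \<integral>z. g z \<xi> \<partial>?M \<partial>lborel)"
    unfolding P_def inner1 by (rule integral_complex_of_real[symmetric])
  also have "\<dots> = (\<integral>z. \<integral>\<xi>. g z \<xi> \<partial>lborel \<partial>?M)"
    by (rule T.Fubini_integral[OF gint])
  also have "\<dots> = (\<integral>z. hh (fst z) * cnj (hh (snd z)) * complex_of_real (Kf e (fst z - snd z)) \<partial>?M)"
    by (simp add: inner2)
  finally have PC: "complex_of_real P = (\<integral>z. hh (fst z) * cnj (hh (snd z)) * complex_of_real (Kf e (fst z - snd z)) \<partial>?M)" .
  have "P \<le> cmod (complex_of_real P)" by simp
  also have "\<dots> \<le> (\<integral>z. cmod (hh (fst z) * cnj (hh (snd z)) * complex_of_real (Kf e (fst z - snd z))) \<partial>?M)"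
    unfolding PC by (rule integral_norm_bound)
  also have "\<dots> = (\<integral>z. cmod (hh (fst z)) * cmod (hh (snd z)) * Kf e (fst z - snd z) \<partial>?M)"
    using Kf_nonneg[OF e] by (simp add: norm_mult)
  also have "\<dots> \<le> (\<integral>z. ((cmod (hh (fst z)))\<^sup>2 * Kf e (fst z - snd z) + (cmod (hh (snd z)))\<^sup>2 * Kf e (fst z - snd z)) / 2 \<partial>?M)"
  proof (rule integral_mono)
    have i1: "integrable ?M (\<lambda>(x, y). (cmod (hh x))\<^sup>2 * Kf e (x - y))" by (rule conv_K_int(1)[OF L e])
    have i2: "integrable ?M (\<lambda>(x, y). (cmod (hh y))\<^sup>2 * Kf e (x - y))"
      using lborel_pair.integrable_product_swap[OF conv_K_int(3)[OF L e]] by (simp add: split_beta')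
    show "integrable ?M (\<lambda>z. ((cmod (hh (fst z)))\<^sup>2 * Kf e (fst z - snd z) + (cmod (hh (snd z)))\<^sup>2 * Kf e (fst z - snd z)) / 2)"
      using i1 i2 by (simp add: split_beta')
    show "integrable ?M (\<lambda>z. cmod (hh (fst z)) * cmod (hh (snd z)) * Kf e (fst z - snd z))"
    proof (rule Bochner_Integration.integrable_bound)
      show "integrable ?M (\<lambda>z. ((cmod (hh (fst z)))\<^sup>2 * Kf e (fst z - snd z) + (cmod (hh (snd z)))\<^sup>2 * Kf e (fst z - snd z)) / 2)"
        using i1 i2 by (simp add: split_beta')
      have Km[measurable]: "Kf e \<in> borel_measurable borel" unfolding Kf_def[abs_def] by measurable
      show "(\<lambda>z. cmod (hh (fst z)) * cmod (hh (snd z)) * Kf e (fst z - snd z)) \<in> borel_measurable ?M" by measurable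
      show "AE z in ?M. norm (cmod (hh (fst z)) * cmod (hh (snd z)) * Kf e (fst z - snd z))
          \<le> norm (((cmod (hh (fst z)))\<^sup>2 * Kf e (fst z - snd z) + (cmod (hh (snd z)))\<^sup>2 * Kf e (fst z - snd z)) / 2)"
      proof (intro AE_I2)
        fix z
        have k: "Kf e (fst z - snd z) \<ge> 0" by (rule Kf_nonneg[OF e])
        have "cmod (hh (fst z)) * cmod (hh (snd z)) * Kf e (fst z - snd z) \<le> ((cmod (hh (fst z)))\<^sup>2 + (cmod (hh (snd z)))\<^sup>2) / 2 * Kf e (fst z - snd z)"
          by (intro mult_right_mono amgm2 k)
        then show "norm (cmod (hh (fst z)) * cmod (hh (snd z)) * Kf e (fst z - snd z))
          \<le> norm (((cmod (hh (fst z)))\<^sup>2 * Kf e (fst z - snd z) + (cmod (hh (snd z)))\<^sup>2 * Kf e (fst z - snd z)) / 2)"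
          using k by (simp add: abs_mult algebra_simps)
      qed
    qed
    fix z
    have k: "Kf e (fst z - snd z) \<ge> 0" by (rule Kf_nonneg[OF e])
    have "cmod (hh (fst z)) * cmod (hh (snd z)) * Kf e (fst z - snd z) \<le> ((cmod (hh (fst z)))\<^sup>2 + (cmod (hh (snd z)))\<^sup>2) / 2 * Kf e (fst z - snd z)"
      by (intro mult_right_mono amgm2 k)
    then show "cmod (hh (fst z)) * cmod (hh (snd z)) * Kf e (fst z - snd z) \<le> ((cmod (hh (fst z)))\<^sup>2 * Kf e (fst z - snd z) + (cmod (hh (snd z)))\<^sup>2 * Kf e (fst z - snd z)) / 2"
      by (simp add: algebra_simps)
  qed
  also have "\<dots> = 2 * pi * nrm2 hh"
  proof -
    have i1: "integrable ?M (\<lambda>(x, y). (cmod (hh x))\<^sup>2 * Kf e (x - y))" by (rule conv_K_int(1)[OF L e])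
    have i2: "integrable ?M (\<lambda>(x, y). (cmod (hh y))\<^sup>2 * Kf e (x - y))"
      using lborel_pair.integrable_product_swap[OF conv_K_int(3)[OF L e]] by (simp add: split_beta')
    have v1: "(\<integral>z. (cmod (hh (fst z)))\<^sup>2 * Kf e (fst z - snd z) \<partial>?M) = 2 * pi * nrm2 hh"
      using conv_K_int(2)[OF L e] by (simp add: split_beta')
    have Km[measurable]: "Kf e \<in> borel_measurable borel" unfolding Kf_def[abs_def] by measurable
    have v2: "(\<integral>z. (cmod (hh (snd z)))\<^sup>2 * Kf e (fst z - snd z) \<partial>?M) = 2 * pi * nrm2 hh"
    proof -
      have "(\<integral>(x, y). (case (y, x) of (x, y) \<Rightarrow> (cmod (hh x))\<^sup>2 * Kf e (y - x)) \<partial>?M)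
          = (\<integral>(x, y). (cmod (hh x))\<^sup>2 * Kf e (y - x) \<partial>?M)"
        by (rule lborel_pair.integral_product_swap) measurable
      then show ?thesis using conv_K_int(4)[OF L e] by (simp add: split_beta')
    qed
    show ?thesis
      using i1 i2 v1 v2 by (simp add: split_beta')
  qed
  finally show ?thesis unfolding P_def .
qed


lemma bessel:
  assumes h: "integrable lborel hh" and L: "L2 hh"
  shows "L2 (FT1 hh) \<and> nrm2 (FT1 hh) \<le> 2 * pi * nrm2 hh"
proof (rule nn_to_L2)
  have Fm[measurable]: "FT1 hh \<in> borel_measurable borel" using h by (rule FT1_meas)
  show "FT1 hh \<in> borel_measurable lborel" by simp
  show "0 \<le> 2 * pi * nrm2 hh" using nrm2_nonneg by simp
  define B where "B = (\<integral>x. cmod (hh x) \<partial>lborel)"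
  define ee where "ee n = inverse (real (Suc n))" for n
  have ee: "ee n > 0" for n by (simp add: ee_def)
  have u_m: "(\<lambda>\<xi>. ennreal ((cmod (FT1 hh \<xi>))\<^sup>2 * exp (- ee n * \<xi>\<^sup>2))) \<in> borel_measurable lborel" for n
    by measurable
  have "(\<integral>\<^sup>+\<xi>. ennreal ((cmod (FT1 hh \<xi>))\<^sup>2) \<partial>lborel)
      = (\<integral>\<^sup>+\<xi>. liminf (\<lambda>n. ennreal ((cmod (FT1 hh \<xi>))\<^sup>2 * exp (- ee n * \<xi>\<^sup>2))) \<partial>lborel)"
  proof (intro nn_integral_cong)
    fix \<xi> :: real
    have eel: "ee \<longlonglongrightarrow> 0" unfolding ee_def by (rule LIMSEQ_inverse_real_of_nat)
    have l1: "(\<lambda>n. - ee n * \<xi>\<^sup>2) \<longlonglongrightarrow> - 0 * \<xi>\<^sup>2"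
      by (intro tendsto_mult tendsto_minus eel tendsto_const)
    have l2: "(\<lambda>n. exp (- ee n * \<xi>\<^sup>2)) \<longlonglongrightarrow> exp (- 0 * \<xi>\<^sup>2)" by (rule tendsto_exp[OF l1])
    have "(\<lambda>n. (cmod (FT1 hh \<xi>))\<^sup>2 * exp (- ee n * \<xi>\<^sup>2)) \<longlonglongrightarrow> (cmod (FT1 hh \<xi>))\<^sup>2 * exp (- 0 * \<xi>\<^sup>2)"
      by (rule tendsto_mult[OF tendsto_const l2])
    then have t: "(\<lambda>n. ennreal ((cmod (FT1 hh \<xi>))\<^sup>2 * exp (- ee n * \<xi>\<^sup>2))) \<longlonglongrightarrow> ennreal ((cmod (FT1 hh \<xi>))\<^sup>2)"
      by (intro tendsto_ennrealI) simp
    show "ennreal ((cmod (FT1 hh \<xi>))\<^sup>2) = liminf (\<lambda>n. ennreal ((cmod (FT1 hh \<xi>))\<^sup>2 * exp (- ee n * \<xi>\<^sup>2)))"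
      using lim_imp_Liminf[OF sequentially_bot t] by (rule sym)
  qed
  also have "\<dots> \<le> liminf (\<lambda>n. \<integral>\<^sup>+\<xi>. ennreal ((cmod (FT1 hh \<xi>))\<^sup>2 * exp (- ee n * \<xi>\<^sup>2)) \<partial>lborel)"
    by (rule nn_integral_liminf[OF u_m])
  also have "\<dots> \<le> limsup (\<lambda>n. \<integral>\<^sup>+\<xi>. ennreal ((cmod (FT1 hh \<xi>))\<^sup>2 * exp (- ee n * \<xi>\<^sup>2)) \<partial>lborel)"
    by (rule Liminf_le_Limsup) simp
  also have "\<dots> \<le> ennreal (2 * pi * nrm2 hh)"
  proof (rule Limsup_bounded, intro always_eventually allI)
    fix n
    have int: "integrable lborel (\<lambda>\<xi>. (cmod (FT1 hh \<xi>))\<^sup>2 * exp (- ee n * \<xi>\<^sup>2))"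
    proof (rule Bochner_Integration.integrable_bound)
      show "integrable lborel (\<lambda>\<xi>. B\<^sup>2 * exp (- ee n * (\<xi> - 0)\<^sup>2))"
        using integrable_gauss[OF ee[of n], of 0] by simp
      show "(\<lambda>\<xi>. (cmod (FT1 hh \<xi>))\<^sup>2 * exp (- ee n * \<xi>\<^sup>2)) \<in> borel_measurable lborel" by measurable
      show "AE \<xi> in lborel. norm ((cmod (FT1 hh \<xi>))\<^sup>2 * exp (- ee n * \<xi>\<^sup>2)) \<le> norm (B\<^sup>2 * exp (- ee n * (\<xi> - 0)\<^sup>2))"
      proof (intro AE_I2)
        fix \<xi>
        have "(cmod (FT1 hh \<xi>))\<^sup>2 \<le> B\<^sup>2" unfolding B_def by (intro power_mono FT1_bound) auto
        then show "norm ((cmod (FT1 hh \<xi>))\<^sup>2 * exp (- ee n * \<xi>\<^sup>2)) \<le> norm (B\<^sup>2 * exp (- ee n * (\<xi> - 0)\<^sup>2))"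
          by (simp add: abs_mult)
      qed
    qed
    have "(\<integral>\<^sup>+\<xi>. ennreal ((cmod (FT1 hh \<xi>))\<^sup>2 * exp (- ee n * \<xi>\<^sup>2)) \<partial>lborel)
        = ennreal (\<integral>\<xi>. (cmod (FT1 hh \<xi>))\<^sup>2 * exp (- ee n * \<xi>\<^sup>2) \<partial>lborel)"
      by (rule nn_integral_eq_integral[OF int]) simp
    also have "\<dots> \<le> ennreal (2 * pi * nrm2 hh)"
      by (intro ennreal_leI bessel_eps[OF h L ee])
    finally show "(\<integral>\<^sup>+\<xi>. ennreal ((cmod (FT1 hh \<xi>))\<^sup>2 * exp (- ee n * \<xi>\<^sup>2)) \<partial>lborel) \<le> ennreal (2 * pi * nrm2 hh)" .
  qed
  finally show "(\<integral>\<^sup>+\<xi>. ennreal ((cmod (FT1 hh \<xi>))\<^sup>2) \<partial>lborel) \<le> ennreal (2 * pi * nrm2 hh)" .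
qed

lemma isFT_L1:
  assumes h: "integrable lborel hh" and L: "L2 hh"
  shows "is_FT hh (FT1 hh)"
  unfolding is_FT_def using bessel[OF h L] FT1_swap[OF h] by auto

definition trunc :: "nat \<Rightarrow> (real \<Rightarrow> complex) \<Rightarrow> real \<Rightarrow> complex" where
  "trunc n f x = (if \<bar>x\<bar> \<le> real n then f x else 0)"

lemma trunc_meas[measurable]:
  assumes "f \<in> borel_measurable lborel" shows "trunc n f \<in> borel_measurable lborel"
proof -
  have [measurable]: "f \<in> borel_measurable lborel" by fact
  show ?thesis unfolding trunc_def[abs_def] by measurable
qed

lemma trunc_L1L2:
  assumes L: "L2 f"
  shows "integrable lborel (trunc n f)" "L2 (trunc n f)" "nrm2 (trunc n f) \<le> nrm2 f"
proof -
  have fm[measurable]: "f \<in> borel_measurable lborel" using L by (simp add: L2_def)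
  define ch where "ch x = (if \<bar>x\<bar> \<le> real n then (1::complex) else 0)" for x
  have chm[measurable]: "ch \<in> borel_measurable lborel" unfolding ch_def[abs_def] by measurable
  have eq: "trunc n f = (\<lambda>x. ch x * f x)" by (rule ext) (simp add: trunc_def ch_def)
  have chL: "L2 ch"
    unfolding L2_def
  proof (intro conjI chm)
    have "(\<lambda>x. (cmod (ch x))\<^sup>2) = indicator {-real n..real n}"
      by (rule ext) (auto simp: ch_def indicator_def abs_le_iff)
    then show "integrable lborel (\<lambda>x. (cmod (ch x))\<^sup>2)"
      by (simp add: integrable_indicator_iff emeasure_lborel_Icc_eq)
  qed
  show "integrable lborel (trunc n f)" unfolding eq by (rule L2_prod_int[OF chL L])
  show "L2 (trunc n f)" unfolding eq by (rule L2_mult_bounded[OF L chm, of 1]) (simp add: ch_def)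
  show "nrm2 (trunc n f) \<le> nrm2 f"
    unfolding nrm2_def
  proof (rule integral_mono)
    show "integrable lborel (\<lambda>x. (cmod (trunc n f x))\<^sup>2)"
      unfolding eq using L2_mult_bounded[OF L chm, of 1] by (simp add: ch_def L2_def)
    show "integrable lborel (\<lambda>x. (cmod (f x))\<^sup>2)" by (rule L2_int[OF L])
  qed (simp add: trunc_def)
qed

lemma trunc_conv:
  assumes L: "L2 f"
  shows "(\<lambda>n. nrm2 (\<lambda>x. f x - trunc n f x)) \<longlonglongrightarrow> 0"
proof -
  have fm[measurable]: "f \<in> borel_measurable lborel" using L by (simp add: L2_def)
  have "(\<lambda>n. \<integral>x. (cmod (f x - trunc n f x))\<^sup>2 \<partial>lborel) \<longlonglongrightarrow> (\<integral>x. (0::real) \<partial>(lborel::real measure))"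
  proof (rule integral_dominated_convergence[where w="\<lambda>x. (cmod (f x))\<^sup>2" and s="\<lambda>n x. (cmod (f x - trunc n f x))\<^sup>2" and f="\<lambda>x. 0"])
    show "integrable lborel (\<lambda>x. (cmod (f x))\<^sup>2)" by (rule L2_int[OF L])
    show "(\<lambda>x. (cmod (f x - trunc n f x))\<^sup>2) \<in> borel_measurable lborel" for n by measurable
    show "AE x in lborel. (\<lambda>n. (cmod (f x - trunc n f x))\<^sup>2) \<longlonglongrightarrow> 0"
    proof (intro AE_I2 tendsto_eventually)
      fix x :: real
      obtain N :: nat where "\<bar>x\<bar> \<le> real N" using real_arch_simple by blast
      then show "\<forall>\<^sub>F n in sequentially. (cmod (f x - trunc n f x))\<^sup>2 = 0"
        by (intro eventually_sequentiallyI[of N]) (auto simp: trunc_def)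
    qed
    show "AE x in lborel. norm ((cmod (f x - trunc n f x))\<^sup>2) \<le> (cmod (f x))\<^sup>2" for n
      by (auto simp: trunc_def)
  qed simp
  then show ?thesis by (simp add: nrm2_def)
qed

lemma nrm2_minus_commute: "nrm2 (\<lambda>x. f x - g x) = nrm2 (\<lambda>x. g x - f x)"
  unfolding nrm2_def by (simp add: norm_minus_commute)

lemma exists_FT:
  assumes L: "L2 f"
  shows "\<exists>F. is_FT f F \<and> nrm2 F \<le> 2 * pi * nrm2 f"
proof -
  have fm[measurable]: "f \<in> borel_measurable lborel" using L by (simp add: L2_def)
  define fn where "fn n = trunc n f" for n
  have fnI: "integrable lborel (fn n)" "L2 (fn n)" "nrm2 (fn n) \<le> nrm2 f" for n
    unfolding fn_def using trunc_L1L2[OF L] by auto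
  define Fn where "Fn n = FT1 (fn n)" for n
  have FnL: "L2 (Fn n)" "nrm2 (Fn n) \<le> 2 * pi * nrm2 (fn n)" for n
    unfolding Fn_def using bessel[OF fnI(1) fnI(2)] by auto
  have diffL: "L2 (\<lambda>x. fn m x - fn n x)" for m n by (intro L2_diff fnI)
  have Fdiff: "Fn m \<xi> - Fn n \<xi> = FT1 (\<lambda>x. fn m x - fn n x) \<xi>" for m n \<xi>
    unfolding Fn_def by (rule FT1_diff[symmetric]) (rule fnI)+
  have Fdiff_nrm: "nrm2 (\<lambda>\<xi>. Fn m \<xi> - Fn n \<xi>) \<le> 2 * pi * nrm2 (\<lambda>x. fn m x - fn n x)" for m n
    unfolding Fdiff using bessel[OF _ diffL[of m n]] fnI(1) by auto
  have tc: "(\<lambda>n. nrm2 (\<lambda>x. f x - fn n x)) \<longlonglongrightarrow> 0" unfolding fn_def by (rule trunc_conv[OF L])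
  have Cauchy: "\<exists>N. \<forall>m\<ge>N. \<forall>n\<ge>N. nrm2 (\<lambda>x. Fn m x - Fn n x) < e" if e: "e > 0" for e
  proof -
    define d where "d = e / (8 * pi + 1)"
    have d: "d > 0" using e pi_gt_zero by (simp add: d_def add_pos_pos)
    obtain N where N0: "\<forall>n\<ge>N. norm (nrm2 (\<lambda>x. f x - fn n x) - 0) < d"
      using LIMSEQ_D[OF tc d] by blast
    have N: "nrm2 (\<lambda>x. f x - fn n x) < d" if "n \<ge> N" for n
      using N0 that nrm2_nonneg by auto
    show ?thesis
    proof (intro exI allI impI)
      fix m n assume m: "m \<ge> N" and n: "n \<ge> N"
      have "nrm2 (\<lambda>x. fn m x - fn n x) \<le> 2 * nrm2 (\<lambda>x. fn m x - f x) + 2 * nrm2 (\<lambda>x. f x - fn n x)"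
        by (rule nrm2_diff_le) (use fnI L in auto)
      also have "nrm2 (\<lambda>x. fn m x - f x) = nrm2 (\<lambda>x. f x - fn m x)" by (rule nrm2_minus_commute)
      finally have "nrm2 (\<lambda>x. fn m x - fn n x) \<le> 4 * d" using N[OF m] N[OF n] by simp
      then have "2 * pi * nrm2 (\<lambda>x. fn m x - fn n x) \<le> 2 * pi * (4 * d)"
        using pi_gt_zero by (intro mult_left_mono) auto
      then have "nrm2 (\<lambda>\<xi>. Fn m \<xi> - Fn n \<xi>) \<le> 2 * pi * (4 * d)"
        using Fdiff_nrm[of m n] by linarith
      also have "2 * pi * (4 * d) < e"
      proof -
        have q: "2 * pi * (4 * d) = e * (8 * pi / (8 * pi + 1))" unfolding d_def by (simp add: field_simps)
        have p8: "0 < 8 * pi + 1" using pi_gt_zero by linarith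
        have "8 * pi / (8 * pi + 1) < 1" using p8 by (subst divide_less_eq_1_pos) auto
        then have "e * (8 * pi / (8 * pi + 1)) < e * 1" using e by (intro mult_strict_left_mono)
        then show ?thesis unfolding q by simp
      qed
      finally show "nrm2 (\<lambda>x. Fn m x - Fn n x) < e" .
    qed
  qed
  obtain F where FL: "L2 F" and Flim: "(\<lambda>n. nrm2 (\<lambda>x. Fn n x - F x)) \<longlonglongrightarrow> 0"
    and Fb: "\<And>B. (\<forall>n. nrm2 (Fn n) \<le> B) \<Longrightarrow> nrm2 F \<le> B"
    using RF[of Fn, OF FnL(1) Cauchy] by blast
  have bound: "nrm2 F \<le> 2 * pi * nrm2 f"
  proof (rule Fb, intro allI)
    fix n
    show "nrm2 (Fn n) \<le> 2 * pi * nrm2 f"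
    proof -
      have "2 * pi * nrm2 (fn n) \<le> 2 * pi * nrm2 f" using fnI(3)[of n] pi_gt_zero by (intro mult_left_mono) auto
      then show ?thesis using FnL(2)[of n] by linarith
    qed
  qed
  have "is_FT f F"
    unfolding is_FT_def
  proof (intro conjI FL allI impI)
    fix \<phi> assume "integrable lborel \<phi> \<and> L2 \<phi>"
    then have pI: "integrable lborel \<phi>" and pL: "L2 \<phi>" by auto
    have FpL: "L2 (FT1 \<phi>)" using bessel[OF pI pL] by simp
    have FTm[measurable]: "FT1 \<phi> \<in> borel_measurable lborel" using FpL by (simp add: L2_def)
    have l1: "(\<lambda>n. \<integral>x. fn n x * FT1 \<phi> x \<partial>lborel) \<longlonglongrightarrow> (\<integral>x. f x * FT1 \<phi> x \<partial>lborel)"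
    proof (rule integral_dominated_convergence[where w="\<lambda>x. cmod (f x) * cmod (FT1 \<phi> x)"])
      show "integrable lborel (\<lambda>x. cmod (f x) * cmod (FT1 \<phi> x))" by (rule L2_prod_int_norm[OF L FpL])
      show "(\<lambda>x. f x * FT1 \<phi> x) \<in> borel_measurable lborel" by measurable
      show "(\<lambda>x. fn n x * FT1 \<phi> x) \<in> borel_measurable lborel" for n unfolding fn_def by measurable
      show "AE x in lborel. (\<lambda>n. fn n x * FT1 \<phi> x) \<longlonglongrightarrow> f x * FT1 \<phi> x"
      proof (intro AE_I2 tendsto_eventually)
        fix x :: real
        obtain N :: nat where "\<bar>x\<bar> \<le> real N" using real_arch_simple by blast
        then show "\<forall>\<^sub>F n in sequentially. fn n x * FT1 \<phi> x = f x * FT1 \<phi> x"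
          by (intro eventually_sequentiallyI[of N]) (auto simp: fn_def trunc_def)
      qed
      show "AE x in lborel. norm (fn n x * FT1 \<phi> x) \<le> cmod (f x) * cmod (FT1 \<phi> x)" for n
        by (auto simp: fn_def trunc_def norm_mult)
    qed
    have eqn: "(\<integral>x. fn n x * FT1 \<phi> x \<partial>lborel) = (\<integral>\<xi>. Fn n \<xi> * \<phi> \<xi> \<partial>lborel)" for n
      unfolding Fn_def by (rule FT1_swap[OF fnI(1) pI])
    have l2: "(\<lambda>n. \<integral>\<xi>. Fn n \<xi> * \<phi> \<xi> \<partial>lborel) \<longlonglongrightarrow> (\<integral>\<xi>. F \<xi> * \<phi> \<xi> \<partial>lborel)"
      by (rule pair_tendsto[OF pL FL FnL(1) Flim])
    show "(\<integral>x. f x * FT1 \<phi> x \<partial>lborel) = (\<integral>\<xi>. F \<xi> * \<phi> \<xi> \<partial>lborel)"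
      using l1 l2 unfolding eqn by (rule LIMSEQ_unique)
  qed
  then show ?thesis using bound by blast
qed

lemma real_distr_density:
  fixes g :: "real \<Rightarrow> real"
  assumes gm: "g \<in> borel_measurable lborel" and g0: "\<And>x. g x \<ge> 0"
    and gi: "integrable lborel g" and g1: "(\<integral>x. g x \<partial>lborel) = 1"
  shows "real_distribution (density lborel g)"
proof -
  have "emeasure (density lborel g) (space (density lborel g)) = 1"
  proof -
    have "emeasure (density lborel g) (space (density lborel g)) = (\<integral>\<^sup>+x. ennreal (g x) * indicator UNIV x \<partial>lborel)"
      using gm by (simp add: emeasure_density)
    also have "\<dots> = (\<integral>\<^sup>+x. ennreal (g x) \<partial>lborel)" by simp
    also have "\<dots> = ennreal (\<integral>x. g x \<partial>lborel)" by (rule nn_integral_eq_integral[OF gi]) (simp add: g0)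
    finally show ?thesis using g1 by simp
  qed
  then have "prob_space (density lborel g)" by (rule prob_spaceI)
  then show ?thesis unfolding real_distribution_def real_distribution_axioms_def by simp
qed

lemma char_density:
  fixes g :: "real \<Rightarrow> real"
  assumes gm: "g \<in> borel_measurable lborel" and g0: "\<And>x. g x \<ge> 0"
  shows "char (density lborel g) t = (\<integral>x. complex_of_real (g x) * iexp (t * x) \<partial>lborel)"
  unfolding char_def using gm g0
  by (subst integral_density) (auto simp: scaleR_conv_of_real)

lemma real_FT_zero:
  fixes r :: "real \<Rightarrow> real"
  assumes ri: "integrable lborel r"
    and z: "\<And>t. (\<integral>x. complex_of_real (r x) * iexp (t * x) \<partial>lborel) = 0"
  shows "AE x in lborel. r x = 0"
proof -
  have rm[measurable]: "r \<in> borel_measurable lborel" using ri by auto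
  define p where "p x = max (r x) 0" for x
  define q where "q x = max (- r x) 0" for x
  have pm[measurable]: "p \<in> borel_measurable lborel" unfolding p_def[abs_def] by measurable
  have qm[measurable]: "q \<in> borel_measurable lborel" unfolding q_def[abs_def] by measurable
  have p0: "p x \<ge> 0" and q0: "q x \<ge> 0" for x by (auto simp: p_def q_def)
  have rpq: "r x = p x - q x" for x by (auto simp: p_def q_def)
  have pi: "integrable lborel p" unfolding p_def by (intro integrable_max ri) auto
  have qi: "integrable lborel q" unfolding q_def by (intro integrable_max ri integrable_minus) auto
  have Eq: "(\<integral>x. complex_of_real (p x) * iexp (t * x) \<partial>lborel) = (\<integral>x. complex_of_real (q x) * iexp (t * x) \<partial>lborel)" for t
  proof -
    have ip: "integrable lborel (\<lambda>x. complex_of_real (p x) * iexp (t * x))"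
      by (rule Bochner_Integration.integrable_bound[OF pi]) (auto simp: norm_mult)
    have iq: "integrable lborel (\<lambda>x. complex_of_real (q x) * iexp (t * x))"
      by (rule Bochner_Integration.integrable_bound[OF qi]) (auto simp: norm_mult)
    have "(\<integral>x. complex_of_real (p x) * iexp (t * x) \<partial>lborel) - (\<integral>x. complex_of_real (q x) * iexp (t * x) \<partial>lborel)
        = (\<integral>x. complex_of_real (r x) * iexp (t * x) \<partial>lborel)"
      using ip iq by (simp add: rpq left_diff_distrib)
    then show ?thesis using z[of t] by simp
  qed
  have m_eq: "(\<integral>x. p x \<partial>lborel) = (\<integral>x. q x \<partial>lborel)"
    using Eq[of 0] by simp
  show ?thesis
  proof (cases "(\<integral>x. p x \<partial>lborel) = 0")
    case True
    have "AE x in lborel. p x = 0" using True pi p0 by (subst integral_nonneg_eq_0_iff_AE[symmetric]) auto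
    moreover have "AE x in lborel. q x = 0" using True m_eq qi q0 by (subst integral_nonneg_eq_0_iff_AE[symmetric]) auto
    ultimately show ?thesis by eventually_elim (simp add: rpq)
  next
    case False
    define m where "m = (\<integral>x. p x \<partial>lborel)"
    have "m \<ge> 0" unfolding m_def using p0 by (intro integral_nonneg_AE) auto
    then have m: "m > 0" using False unfolding m_def by linarith
    define P where "P = density lborel (\<lambda>x. p x / m)"
    define Q where "Q = density lborel (\<lambda>x. q x / m)"
    have RP: "real_distribution P" unfolding P_def
      by (rule real_distr_density) (use m p0 pi in \<open>auto simp: m_def\<close>)
    have RQ: "real_distribution Q" unfolding Q_def
      by (rule real_distr_density) (use m q0 qi m_eq in \<open>auto simp: m_def\<close>)
    have "char P = char Q"
    proof
      fix t
      have "char P t = (\<integral>x. complex_of_real (p x / m) * iexp (t * x) \<partial>lborel)"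
        unfolding P_def by (rule char_density) (use m p0 in auto)
      also have "\<dots> = complex_of_real (1/m) * (\<integral>x. complex_of_real (p x) * iexp (t * x) \<partial>lborel)"
        by (simp add: mult.assoc)
      also have "\<dots> = complex_of_real (1/m) * (\<integral>x. complex_of_real (q x) * iexp (t * x) \<partial>lborel)"
        by (simp only: Eq)
      also have "\<dots> = (\<integral>x. complex_of_real (q x / m) * iexp (t * x) \<partial>lborel)"
        by (simp add: mult.assoc)
      also have "\<dots> = char Q t"
        unfolding Q_def by (rule char_density[symmetric]) (use m q0 in auto)
      finally show "char P t = char Q t" .
    qed
    then have "P = Q" by (rule Levy_uniqueness[OF RP RQ])
    then have "AE x in lborel. ennreal (p x / m) = ennreal (q x / m)"
      unfolding P_def Q_def by (subst (asm) sigma_finite_measure.density_unique_iff[OF sigma_finite_lborel]) auto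
    then show ?thesis
    proof eventually_elim
      case (elim x)
      then have "p x / m = q x / m" using p0[of x] q0[of x] m by (simp add: ennreal_inj)
      then show ?case using m by (simp add: rpq)
    qed
  qed
qed


lemma int_iexp:
  assumes wi: "integrable lborel w"
  shows "integrable lborel (\<lambda>x. w x * iexp (t * x))"
proof (rule Bochner_Integration.integrable_bound[OF integrable_norm[OF wi]])
  have [measurable]: "w \<in> borel_measurable lborel" using wi by auto
  show "(\<lambda>x. w x * iexp (t * x)) \<in> borel_measurable lborel" by measurable
qed (auto simp: norm_mult)

lemma complex_FT_zero:
  fixes w :: "real \<Rightarrow> complex"
  assumes wi: "integrable lborel w" and z: "\<And>t. (\<integral>x. w x * iexp (t * x) \<partial>lborel) = 0"
  shows "AE x in lborel. w x = 0"
proof -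
  have wm[measurable]: "w \<in> borel_measurable lborel" using wi by auto
  have cz: "(\<integral>x. cnj (w x) * iexp (t * x) \<partial>lborel) = 0" for t
  proof -
    have "(\<integral>x. cnj (w x) * iexp (t * x) \<partial>lborel) = (\<integral>x. cnj (w x * iexp ((- t) * x)) \<partial>lborel)"
      by (simp add: exp_cnj)
    also have "\<dots> = cnj (\<integral>x. w x * iexp ((- t) * x) \<partial>lborel)" by (rule Bochner_Integration.integral_cnj)
    also have "\<dots> = 0" using z[of "- t"] by simp
    finally show ?thesis .
  qed
  have ci: "integrable lborel (\<lambda>x. cnj (w x))" using wi by simp
  have ReZ: "AE x in lborel. Re (w x) = 0"
  proof (rule real_FT_zero)
    show "integrable lborel (\<lambda>x. Re (w x))" using wi by simp
    fix t
    have eq: "complex_of_real (Re (w x)) * iexp (t * x) = (w x * iexp (t * x) + cnj (w x) * iexp (t * x)) / 2" for x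
    proof -
      have e1: "complex_of_real (Re (w x)) = (w x + cnj (w x)) / 2" by (simp add: complex_add_cnj)
      show ?thesis by (subst e1) (simp add: add_divide_distrib ring_distribs)
    qed
    show "(\<integral>x. complex_of_real (Re (w x)) * iexp (t * x) \<partial>lborel) = 0"
      unfolding eq using int_iexp[OF wi, of t] int_iexp[OF ci, of t] z[of t] cz[of t] by simp
  qed
  have ImZ: "AE x in lborel. Im (w x) = 0"
  proof (rule real_FT_zero)
    show "integrable lborel (\<lambda>x. Im (w x))" using wi by simp
    fix t
    have eq: "complex_of_real (Im (w x)) * iexp (t * x) = (w x * iexp (t * x) - cnj (w x) * iexp (t * x)) / (2 * \<i>)" for x
    proof -
      have d: "w x - cnj (w x) = complex_of_real (Im (w x)) * (2 * \<i>)"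
        by (simp add: complex_eq_iff)
      have d2: "w x * iexp (t * x) - cnj (w x) * iexp (t * x) = (complex_of_real (Im (w x)) * iexp (t * x)) * (2 * \<i>)"
        by (simp only: left_diff_distrib[symmetric] d mult_ac)
      show ?thesis by (simp only: d2, rule nonzero_mult_div_cancel_right[symmetric]) simp
    qed
    show "(\<integral>x. complex_of_real (Im (w x)) * iexp (t * x) \<partial>lborel) = 0"
      unfolding eq using int_iexp[OF wi, of t] int_iexp[OF ci, of t] z[of t] cz[of t] by simp
  qed
  show ?thesis using ReZ ImZ by eventually_elim (simp add: complex_eq_iff)
qed

lemma L2_gauss: "L2 (\<lambda>x. complex_of_real (exp (- x\<^sup>2)))"
  unfolding L2_def
proof
  show "(\<lambda>x. complex_of_real (exp (- x\<^sup>2))) \<in> borel_measurable lborel" by measurable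
  have "(\<lambda>x. (cmod (complex_of_real (exp (- x\<^sup>2))))\<^sup>2) = (\<lambda>x. exp (- 2 * (x - 0)\<^sup>2))"
    by (rule ext) (simp add: power2_eq_square exp_add[symmetric])
  then show "integrable lborel (\<lambda>x. (cmod (complex_of_real (exp (- x\<^sup>2))))\<^sup>2)"
    using integrable_gauss[of 2 0] by simp
qed

lemma gauss_test_zero:
  assumes L: "L2 D" and z: "\<And>t. (\<integral>x. D x * (complex_of_real (exp (- x\<^sup>2)) * iexp (t * x)) \<partial>lborel) = 0"
  shows "AE x in lborel. D x = 0"
proof -
  define w where "w x = D x * complex_of_real (exp (- x\<^sup>2))" for x
  have wi: "integrable lborel w" unfolding w_def by (rule L2_prod_int[OF L L2_gauss])
  have "AE x in lborel. w x = 0"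
    by (rule complex_FT_zero[OF wi]) (use z in \<open>simp add: w_def mult.assoc\<close>)
  then show ?thesis by eventually_elim (simp add: w_def)
qed

definition psi :: "real \<Rightarrow> real \<Rightarrow> complex" where
  "psi t x = complex_of_real (exp (- x\<^sup>2)) * iexp (t * x)"

lemma psi_meas[measurable]: "psi t \<in> borel_measurable borel"
  unfolding psi_def[abs_def] by measurable

lemma psi_L1: "integrable lborel (psi t)"
proof (rule Bochner_Integration.integrable_bound)
  show "integrable lborel (\<lambda>x::real. exp (- (x - 0)\<^sup>2))" using integrable_gauss[of 1 0] by simp
  show "psi t \<in> borel_measurable lborel" by simp
qed (auto simp: psi_def norm_mult)

lemma psi_L2: "L2 (psi t)"
proof -
  have "L2 (\<lambda>x. iexp (t * x) * complex_of_real (exp (- x\<^sup>2)))"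
    by (rule L2_mult_bounded[OF L2_gauss, of _ 1]) auto
  then show ?thesis unfolding psi_def by (simp add: mult.commute)
qed

lemma gauss4_L1L2:
  "integrable lborel (\<lambda>y. complex_of_real (exp (- (1/4) * (y - c)\<^sup>2)))"
  "L2 (\<lambda>y. complex_of_real (exp (- (1/4) * (y - c)\<^sup>2)))"
proof -
  show i: "integrable lborel (\<lambda>y. complex_of_real (exp (- (1/4) * (y - c)\<^sup>2)))"
    using integrable_gauss[of "1/4" c] by simp
  show "L2 (\<lambda>y. complex_of_real (exp (- (1/4) * (y - c)\<^sup>2)))"
    unfolding L2_def
  proof
    show "(\<lambda>y. complex_of_real (exp (- (1/4) * (y - c)\<^sup>2))) \<in> borel_measurable lborel" by measurable
    have "(\<lambda>y. (cmod (complex_of_real (exp (- (1/4) * (y - c)\<^sup>2))))\<^sup>2) = (\<lambda>y. exp (- (1/2) * (y - c)\<^sup>2))"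
      by (rule ext) (simp add: power2_eq_square exp_add[symmetric])
    then show "integrable lborel (\<lambda>y. (cmod (complex_of_real (exp (- (1/4) * (y - c)\<^sup>2))))\<^sup>2)"
      using integrable_gauss[of "1/2" c] by simp
  qed
qed

lemma FT1_psi: "FT1 (psi t) y = complex_of_real (sqrt pi) * complex_of_real (exp (- (1/4) * (y - t)\<^sup>2))"
proof -
  have "FT1 (psi t) y = FT1 (\<lambda>x. complex_of_real (exp (- 1 * (x - 0)\<^sup>2))) (y - t)"
    unfolding FT1_def psi_def
  proof (rule Bochner_Integration.integral_cong[OF refl])
    fix x
    have "iexp (t * x) * exp (- \<i> * complex_of_real (x * y)) = exp (- \<i> * complex_of_real (x * (y - t)))"
      by (subst exp_add[symmetric]) (rule arg_cong[where f=exp], simp add: algebra_simps)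
    then show "complex_of_real (exp (- x\<^sup>2)) * iexp (t * x) * exp (- \<i> * complex_of_real (x * y))
      = complex_of_real (exp (- 1 * (x - 0)\<^sup>2)) * exp (- \<i> * complex_of_real (x * (y - t)))"
      by (simp add: mult.assoc)
  qed
  also have "\<dots> = complex_of_real (sqrt pi * exp (- (y - t)\<^sup>2 / 4))"
    using GFT[of 1 0 "y - t"] by simp
  also have "exp (- (y - t)\<^sup>2 / 4) = exp (- (1/4) * (y - t)\<^sup>2)" by simp
  finally show ?thesis by simp
qed

lemma FT1_gauss4: "FT1 (\<lambda>y. complex_of_real (exp (- (1/4) * (y - c)\<^sup>2))) z
   = complex_of_real (2 * sqrt pi) * psi (- c) z"
proof -
  have "FT1 (\<lambda>y. complex_of_real (exp (- (1/4) * (y - c)\<^sup>2))) z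
      = exp (- \<i> * complex_of_real (z * c)) * complex_of_real (sqrt (pi / (1/4)) * exp (- z\<^sup>2 / (4 * (1/4))))"
    by (rule GFT) simp
  also have "sqrt (pi / (1/4)) = 2 * sqrt pi"
    by (simp add: real_sqrt_mult)
  also have "exp (- \<i> * complex_of_real (z * c)) = iexp (- c * z)" by (simp add: mult.commute)
  finally show ?thesis by (simp add: psi_def mult_ac)
qed

lemma refl_integral:
  fixes f :: "real \<Rightarrow> 'a::{banach, second_countable_topology}"
  shows "(\<integral>x. f (- x) \<partial>lborel) = (\<integral>x. f x \<partial>lborel)"
  using lborel_integral_real_affine[of "-1" f 0] by simp

lemma refl_integrable:
  fixes f :: "real \<Rightarrow> 'a::{banach, second_countable_topology}"
  shows "integrable lborel (\<lambda>x. f (- x)) \<longleftrightarrow> integrable lborel f"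
  using lborel_integrable_real_affine_iff[of "-1" f 0] by simp

lemma refl_L2:
  assumes "L2 f" shows "L2 (\<lambda>x. f (- x))" "nrm2 (\<lambda>x. f (- x)) = nrm2 f"
proof -
  have [measurable]: "f \<in> borel_measurable lborel" using assms by (simp add: L2_def)
  show "L2 (\<lambda>x. f (- x))"
    unfolding L2_def using L2_int[OF assms] refl_integrable[of "\<lambda>x. (cmod (f x))\<^sup>2"] by simp
  show "nrm2 (\<lambda>x. f (- x)) = nrm2 f"
    unfolding nrm2_def by (rule refl_integral[of "\<lambda>x. (cmod (f x))\<^sup>2"])
qed

lemma isFT_unique:
  assumes F1: "is_FT f F1" and F2: "is_FT f F2"
  shows "AE x in lborel. F1 x = F2 x"
proof -
  have L1: "L2 F1" and L2': "L2 F2" using F1 F2 by (auto simp: is_FT_def)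
  have "AE x in lborel. F1 x - F2 x = 0"
  proof (rule gauss_test_zero)
    show "L2 (\<lambda>x. F1 x - F2 x)" by (rule L2_diff[OF L1 L2'])
    fix t
    have e1: "(\<integral>x. f x * FT1 (psi t) x \<partial>lborel) = (\<integral>\<xi>. F1 \<xi> * psi t \<xi> \<partial>lborel)"
      using F1 psi_L1 psi_L2 by (auto simp: is_FT_def)
    have e2: "(\<integral>x. f x * FT1 (psi t) x \<partial>lborel) = (\<integral>\<xi>. F2 \<xi> * psi t \<xi> \<partial>lborel)"
      using F2 psi_L1 psi_L2 by (auto simp: is_FT_def)
    have "(\<integral>x. (F1 x - F2 x) * psi t x \<partial>lborel) = (\<integral>\<xi>. F1 \<xi> * psi t \<xi> \<partial>lborel) - (\<integral>\<xi>. F2 \<xi> * psi t \<xi> \<partial>lborel)"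
      using L2_prod_int[OF L1 psi_L2] L2_prod_int[OF L2' psi_L2] by (simp add: left_diff_distrib)
    also have "\<dots> = 0" using e1 e2 by simp
    finally show "(\<integral>x. (F1 x - F2 x) * (complex_of_real (exp (- x\<^sup>2)) * iexp (t * x)) \<partial>lborel) = 0"
      by (simp add: psi_def)
  qed
  then show ?thesis by simp
qed

lemma isFT_unique_left:
  assumes g1: "L2 g1" and g2: "L2 g2" and G1: "is_FT g1 G" and G2: "is_FT g2 G"
  shows "AE x in lborel. g1 x = g2 x"
proof -
  have "AE x in lborel. g1 x - g2 x = 0"
  proof (rule gauss_test_zero)
    show "L2 (\<lambda>x. g1 x - g2 x)" by (rule L2_diff[OF g1 g2])
    fix t
    define \<phi> where "\<phi> = (\<lambda>y. complex_of_real (exp (- (1/4) * (y - (- t))\<^sup>2)))"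
    have pI: "integrable lborel \<phi>" and pL: "L2 \<phi>" unfolding \<phi>_def by (rule gauss4_L1L2)+
    have FTp: "FT1 \<phi> x = complex_of_real (2 * sqrt pi) * psi t x" for x
      unfolding \<phi>_def using FT1_gauss4[of "- t" x] by simp
    have e1: "(\<integral>x. g1 x * FT1 \<phi> x \<partial>lborel) = (\<integral>\<xi>. G \<xi> * \<phi> \<xi> \<partial>lborel)"
      using G1 pI pL by (auto simp: is_FT_def)
    have e2: "(\<integral>x. g2 x * FT1 \<phi> x \<partial>lborel) = (\<integral>\<xi>. G \<xi> * \<phi> \<xi> \<partial>lborel)"
      using G2 pI pL by (auto simp: is_FT_def)
    define c where "c = complex_of_real (2 * sqrt pi)"
    have c: "c \<noteq> 0" unfolding c_def by simp
    have a1: "(\<integral>x. g1 x * FT1 \<phi> x \<partial>lborel) = c * (\<integral>x. g1 x * psi t x \<partial>lborel)"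
    proof -
      have "(\<lambda>x. g1 x * FT1 \<phi> x) = (\<lambda>x. c * (g1 x * psi t x))" by (rule ext) (simp add: FTp c_def mult_ac)
      then show ?thesis by simp
    qed
    have a2: "(\<integral>x. g2 x * FT1 \<phi> x \<partial>lborel) = c * (\<integral>x. g2 x * psi t x \<partial>lborel)"
    proof -
      have "(\<lambda>x. g2 x * FT1 \<phi> x) = (\<lambda>x. c * (g2 x * psi t x))" by (rule ext) (simp add: FTp c_def mult_ac)
      then show ?thesis by simp
    qed
    have "(\<integral>x. (g1 x - g2 x) * psi t x \<partial>lborel) = (\<integral>x. g1 x * psi t x \<partial>lborel) - (\<integral>x. g2 x * psi t x \<partial>lborel)"
      using L2_prod_int[OF g1 psi_L2] L2_prod_int[OF g2 psi_L2] by (simp add: left_diff_distrib)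
    also have "\<dots> = 0"
    proof -
      have "c * (\<integral>x. g1 x * psi t x \<partial>lborel) = c * (\<integral>x. g2 x * psi t x \<partial>lborel)" using e1 e2 a1 a2 by simp
      then have "(\<integral>x. g1 x * psi t x \<partial>lborel) = (\<integral>x. g2 x * psi t x \<partial>lborel)" using c by simp
      then show ?thesis by simp
    qed
    finally have "(\<integral>x. (g1 x - g2 x) * psi t x \<partial>lborel) = 0" .
    then show "(\<integral>x. (g1 x - g2 x) * (complex_of_real (exp (- x\<^sup>2)) * iexp (t * x)) \<partial>lborel) = 0"
      by (simp add: psi_def)
  qed
  then show ?thesis by simp
qed


lemma is_FT_AE_cong:
  assumes F: "is_FT f F" and ae: "AE x in lborel. F x = F' x" and m: "F' \<in> borel_measurable lborel"
  shows "is_FT f F'"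
  unfolding is_FT_def
proof (intro conjI allI impI)
  have L: "L2 F" using F by (simp add: is_FT_def)
  have [measurable]: "F \<in> borel_measurable lborel" "F' \<in> borel_measurable lborel" using L m by (auto simp: L2_def)
  show "L2 F'" by (rule L2_bound[OF L m, of 1]) (use ae in auto)
  fix \<phi> assume p: "integrable lborel \<phi> \<and> L2 \<phi>"
  then have [measurable]: "\<phi> \<in> borel_measurable lborel" by auto
  have "(\<integral>x. f x * FT1 \<phi> x \<partial>lborel) = (\<integral>\<xi>. F \<xi> * \<phi> \<xi> \<partial>lborel)" using F p by (simp add: is_FT_def)
  also have "\<dots> = (\<integral>\<xi>. F' \<xi> * \<phi> \<xi> \<partial>lborel)"
    by (rule integral_cong_AE) (use ae in auto)
  finally show "(\<integral>x. f x * FT1 \<phi> x \<partial>lborel) = (\<integral>\<xi>. F' \<xi> * \<phi> \<xi> \<partial>lborel)" .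
qed

lemma is_FT_cmult:
  assumes F: "is_FT f F"
  shows "is_FT (\<lambda>x. c * f x) (\<lambda>x. c * F x)"
  unfolding is_FT_def
proof (intro conjI allI impI)
  show "L2 (\<lambda>x. c * F x)" using F by (intro L2_cmult) (simp add: is_FT_def)
  fix \<phi> assume p: "integrable lborel \<phi> \<and> L2 \<phi>"
  have "(\<integral>x. f x * FT1 \<phi> x \<partial>lborel) = (\<integral>\<xi>. F \<xi> * \<phi> \<xi> \<partial>lborel)" using F p by (simp add: is_FT_def)
  then show "(\<integral>x. c * f x * FT1 \<phi> x \<partial>lborel) = (\<integral>\<xi>. c * F \<xi> * \<phi> \<xi> \<partial>lborel)"
    by (simp add: mult.assoc)
qed

lemma nrm2_cmult: "nrm2 (\<lambda>x. c * f x) = (cmod c)\<^sup>2 * nrm2 f"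
  unfolding nrm2_def by (simp add: norm_mult power_mult_distrib)

lemma FT_spec:
  assumes L: "L2 f"
  shows "is_FT f (FT f)" "nrm2 (FT f) \<le> 2 * pi * nrm2 f"
proof -
  obtain F0 where F0: "is_FT f F0" and b: "nrm2 F0 \<le> 2 * pi * nrm2 f" using exists_FT[OF L] by blast
  show S: "is_FT f (FT f)" unfolding FT_def by (rule someI[where P="is_FT f", OF F0])
  have "AE x in lborel. FT f x = F0 x" by (rule isFT_unique[OF S F0])
  moreover have "FT f \<in> borel_measurable lborel" "F0 \<in> borel_measurable lborel"
    using S F0 by (auto simp: is_FT_def L2_def)
  ultimately have "nrm2 (FT f) = nrm2 F0" by (intro nrm2_AE_cong)
  then show "nrm2 (FT f) \<le> 2 * pi * nrm2 f" using b by simp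
qed

lemma FT_L2: "L2 f \<Longrightarrow> L2 (FT f)"
  using FT_spec(1) by (auto simp: is_FT_def)

lemma inversion:
  assumes L: "L2 u"
  shows "AE x in lborel. FT (FT u) x = complex_of_real (2 * pi) * u (- x)"
proof -
  define U where "U = FT u"
  define V where "V = FT U"
  have UL: "L2 U" unfolding U_def by (rule FT_L2[OF L])
  have VL: "L2 V" unfolding V_def by (rule FT_L2[OF UL])
  have SU: "is_FT u U" unfolding U_def by (rule FT_spec(1)[OF L])
  have SV: "is_FT U V" unfolding V_def by (rule FT_spec(1)[OF UL])
  have RL: "L2 (\<lambda>x. u (- x))" by (rule refl_L2(1)[OF L])
  have DL: "L2 (\<lambda>x. V x - complex_of_real (2 * pi) * u (- x))" by (intro L2_diff VL L2_cmult RL)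
  have "AE x in lborel. V x - complex_of_real (2 * pi) * u (- x) = 0"
  proof (rule gauss_test_zero[OF DL])
    fix t
    define chi0 where "chi0 = (\<lambda>y. complex_of_real (exp (- (1/4) * (y - t)\<^sup>2)))"
    have cI: "integrable lborel chi0" and cL: "L2 chi0" unfolding chi0_def by (rule gauss4_L1L2)+
    have s1: "(\<integral>x. V x * psi t x \<partial>lborel) = (\<integral>x. U x * FT1 (psi t) x \<partial>lborel)"
      using SV psi_L1 psi_L2 by (simp add: is_FT_def)
    also have "\<dots> = complex_of_real (sqrt pi) * (\<integral>x. U x * chi0 x \<partial>lborel)"
    proof -
      have "(\<lambda>x. U x * FT1 (psi t) x) = (\<lambda>x. complex_of_real (sqrt pi) * (U x * chi0 x))"
        by (rule ext) (simp add: FT1_psi chi0_def mult_ac)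
      then show ?thesis by simp
    qed
    also have "(\<integral>x. U x * chi0 x \<partial>lborel) = (\<integral>x. u x * FT1 chi0 x \<partial>lborel)"
      using SU cI cL by (simp add: is_FT_def)
    also have "\<dots> = complex_of_real (2 * sqrt pi) * (\<integral>x. u x * psi t (- x) \<partial>lborel)"
    proof -
      have "(\<lambda>x. u x * FT1 chi0 x) = (\<lambda>x. complex_of_real (2 * sqrt pi) * (u x * psi t (- x)))"
      proof (rule ext)
        fix x
        have "psi (- t) x = psi t (- x)" by (simp add: psi_def)
        then show "u x * FT1 chi0 x = complex_of_real (2 * sqrt pi) * (u x * psi t (- x))"
          unfolding chi0_def using FT1_gauss4[of t x] by (simp add: mult_ac)
      qed
      then show ?thesis by simp
    qed
    also have "(\<integral>x. u x * psi t (- x) \<partial>lborel) = (\<integral>x. u (- x) * psi t x \<partial>lborel)"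
      using refl_integral[of "\<lambda>x. u (- x) * psi t x"] by simp
    finally have E: "(\<integral>x. V x * psi t x \<partial>lborel) = complex_of_real (2 * pi) * (\<integral>x. u (- x) * psi t x \<partial>lborel)"
    proof -
      assume "(\<integral>x. V x * psi t x \<partial>lborel) = complex_of_real (sqrt pi) * (complex_of_real (2 * sqrt pi) * (\<integral>x. u (- x) * psi t x \<partial>lborel))"
      moreover have "complex_of_real (sqrt pi) * complex_of_real (2 * sqrt pi) = complex_of_real (2 * pi)"
        by (simp flip: of_real_mult)
      ultimately show ?thesis by (simp add: mult.assoc[symmetric])
    qed
    have "(\<integral>x. (V x - complex_of_real (2 * pi) * u (- x)) * psi t x \<partial>lborel)
        = (\<integral>x. V x * psi t x \<partial>lborel) - complex_of_real (2 * pi) * (\<integral>x. u (- x) * psi t x \<partial>lborel)"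
      using L2_prod_int[OF VL psi_L2] L2_prod_int[OF RL psi_L2] by (simp add: left_diff_distrib mult.assoc)
    also have "\<dots> = 0" using E by simp
    finally show "(\<integral>x. (V x - complex_of_real (2 * pi) * u (- x)) * (complex_of_real (exp (- x\<^sup>2)) * iexp (t * x)) \<partial>lborel) = 0"
      by (simp add: psi_def)
  qed
  then show ?thesis unfolding V_def U_def by simp
qed

lemma exists_inv:
  assumes L: "L2 G"
  shows "\<exists>g. L2 g \<and> is_FT g G \<and> nrm2 g \<le> nrm2 G / (2 * pi)"
proof -
  define RG where "RG = (\<lambda>x. G (- x))"
  have RL: "L2 RG" unfolding RG_def by (rule refl_L2(1)[OF L])
  have Rn: "nrm2 RG = nrm2 G" unfolding RG_def by (rule refl_L2(2)[OF L])
  define W where "W = FT RG"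
  have WL: "L2 W" unfolding W_def by (rule FT_L2[OF RL])
  have Wn: "nrm2 W \<le> 2 * pi * nrm2 G" unfolding W_def using FT_spec(2)[OF RL] Rn by simp
  define g where "g = (\<lambda>x. complex_of_real (1 / (2 * pi)) * W x)"
  have gL: "L2 g" unfolding g_def by (rule L2_cmult[OF WL])
  have gn: "nrm2 g \<le> nrm2 G / (2 * pi)"
  proof -
    have cm: "cmod (complex_of_real (1 / (2 * pi))) = 1 / (2 * pi)" using pi_gt_zero by (simp only: norm_of_real) simp
    have "nrm2 g = (1 / (2 * pi))\<^sup>2 * nrm2 W" unfolding g_def nrm2_cmult cm ..
    also have "\<dots> \<le> (1 / (2 * pi))\<^sup>2 * (2 * pi * nrm2 G)" by (intro mult_left_mono Wn) simp
    also have "\<dots> = nrm2 G / (2 * pi)" by (simp add: power2_eq_square field_simps)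
    finally show ?thesis .
  qed
  have S1: "is_FT g (\<lambda>x. complex_of_real (1 / (2 * pi)) * FT W x)"
    unfolding g_def by (rule is_FT_cmult[OF FT_spec(1)[OF WL]])
  have ae: "AE x in lborel. complex_of_real (1 / (2 * pi)) * FT W x = G x"
    using inversion[OF RL] unfolding W_def[symmetric]
  proof eventually_elim
    case (elim x)
    then show ?case by (simp add: RG_def)
  qed
  have "is_FT g G"
    by (rule is_FT_AE_cong[OF S1 ae]) (use L in \<open>simp add: L2_def\<close>)
  then show ?thesis using gL gn by blast
qed

lemma tanh_le_self:
  fixes y :: real assumes y: "y \<ge> 0" shows "tanh y \<le> y"
proof -
  have "(\<lambda>z. z - tanh z) 0 \<le> (\<lambda>z. z - tanh z) y"
  proof (rule DERIV_nonneg_imp_nondecreasing[OF y])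
    fix x :: real
    have c: "cosh x \<noteq> 0" using cosh_real_pos[of x] by simp
    have "(tanh has_real_derivative 1 - tanh x ^ 2) (at x)"
      unfolding tanh_def[abs_def] using c
      by (auto intro!: derivative_eq_intros simp: power2_eq_square field_split_simps)
    then have "((\<lambda>z. z - tanh z) has_real_derivative (1 - (1 - tanh x ^ 2))) (at x)"
      by (intro derivative_intros) auto
    then show "\<exists>d. ((\<lambda>z. z - tanh z) has_real_derivative d) (at x) \<and> d \<ge> 0" by force
  qed
  then show ?thesis by simp
qed

lemma tanh_ge:
  fixes y :: real assumes y: "y \<ge> 0" shows "y \<le> (1 + y) * tanh y"
proof -
  define e where "e = exp (- 2 * y)"
  have e0: "e > 0" by (simp add: e_def)
  have "1 + 2 * y \<le> exp (2 * y)" using exp_ge_add_one_self[of "2*y"] by simp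
  then have "e * (1 + 2 * y) \<le> e * exp (2 * y)" using e0 by (intro mult_left_mono) auto
  also have "e * exp (2 * y) = 1" by (simp add: e_def exp_add[symmetric])
  finally have key: "e * (1 + 2 * y) \<le> 1" .
  have t: "tanh y = (1 - e) / (1 + e)" by (simp add: tanh_real_altdef e_def)
  have "y * (1 + e) \<le> (1 + y) * (1 - e)" using key by (simp add: algebra_simps)
  then have "y \<le> (1 + y) * (1 - e) / (1 + e)" using e0 by (simp add: field_simps)
  then show ?thesis unfolding t by simp
qed

lemma Kinv_bounds:
  fixes \<xi> :: real
  shows "1 \<le> (cmod (Kinv_symb \<xi>))\<^sup>2" "(cmod (Kinv_symb \<xi>))\<^sup>2 \<le> 1 + \<bar>\<xi>\<bar>"
proof -
  have "1 \<le> (cmod (Kinv_symb \<xi>))\<^sup>2 \<and> (cmod (Kinv_symb \<xi>))\<^sup>2 \<le> 1 + \<bar>\<xi>\<bar>"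
  proof (cases "\<xi> = 0")
    case True then show ?thesis by (simp add: Kinv_symb_def K_symb_def)
  next
    case False
    define y where "y = \<bar>\<xi>\<bar>"
    have y: "y > 0" using False by (simp add: y_def)
    have ty: "tanh \<xi> / \<xi> = tanh y / y"
      using False by (cases "\<xi> > 0") (auto simp: y_def)
    have tp: "tanh y > 0" using y by simp
    have q: "(cmod (Kinv_symb \<xi>))\<^sup>2 = y / tanh y"
    proof -
      have "K_symb \<xi> = sqrt (tanh y / y)" using False ty by (simp add: K_symb_def)
      moreover have "tanh y / y > 0" using y tp by simp
      ultimately have "cmod (Kinv_symb \<xi>) = 1 / sqrt (tanh y / y)"
        by (simp add: Kinv_symb_def norm_divide)
      then have "(cmod (Kinv_symb \<xi>))\<^sup>2 = 1 / (tanh y / y)"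
        using \<open>tanh y / y > 0\<close> by (simp add: power_divide)
      then show ?thesis by simp
    qed
    have "tanh y \<le> y" using tanh_le_self[of y] y by simp
    then have a: "1 \<le> y / tanh y" using tp by simp
    have "y \<le> (1 + y) * tanh y" using tanh_ge[of y] y by simp
    then have b: "y / tanh y \<le> 1 + y" using tp by (simp add: divide_le_eq)
    show ?thesis using a b q by (simp add: y_def)
  qed
  then show "1 \<le> (cmod (Kinv_symb \<xi>))\<^sup>2" "(cmod (Kinv_symb \<xi>))\<^sup>2 \<le> 1 + \<bar>\<xi>\<bar>" by auto
qed

lemma tanh_meas[measurable]: "(tanh :: real \<Rightarrow> real) \<in> borel_measurable borel"
proof -
  have "continuous_on UNIV (\<lambda>x::real. tanh x)"
    by (intro continuous_intros) (use cosh_real_pos in force)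
  then show ?thesis by (rule borel_measurable_continuous_onI)
qed

lemma Kinv_meas[measurable]: "Kinv_symb \<in> borel_measurable borel"
  unfolding Kinv_symb_def[abs_def] K_symb_def[abs_def] by measurable

lemma J_meas[measurable]: "J_symb a \<in> borel_measurable borel"
  unfolding J_symb_def[abs_def] by measurable

lemma J_sq: "(cmod (J_symb a \<xi>))\<^sup>2 = (1 + \<xi>\<^sup>2) powr a"
proof -
  have "(cmod (J_symb a \<xi>))\<^sup>2 = ((1 + \<xi>\<^sup>2) powr (a/2))\<^sup>2" by (simp add: J_symb_def)
  also have "\<dots> = (1 + \<xi>\<^sup>2) powr (a/2 + a/2)" by (simp only: power2_eq_square powr_add)
  finally show ?thesis by simp
qed

lemma one_abs_le: "1 + \<bar>\<xi>::real\<bar> \<le> 2 * (1 + \<xi>\<^sup>2) powr (1/2)"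
proof -
  have "(1 + \<bar>\<xi>\<bar>)\<^sup>2 \<le> (2 * sqrt (1 + \<xi>\<^sup>2))\<^sup>2"
  proof -
    have "(1 + \<bar>\<xi>\<bar>)\<^sup>2 \<le> 2 * (1 + \<xi>\<^sup>2)" using amgm2[of 1 "\<bar>\<xi>\<bar>"] by (simp add: power2_sum)
    also have "\<dots> \<le> 4 * (1 + \<xi>\<^sup>2)" by simp
    also have "\<dots> = (2 * sqrt (1 + \<xi>\<^sup>2))\<^sup>2" by (simp add: power_mult_distrib)
    finally show ?thesis .
  qed
  then have "1 + \<bar>\<xi>\<bar> \<le> 2 * sqrt (1 + \<xi>\<^sup>2)" by (rule power2_le_imp_le) simp
  then show ?thesis by (simp add: powr_half_sqrt)
qed


lemma FT_of_witness:
  assumes "is_FT g G" shows "is_FT g (FT g)"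
  unfolding FT_def by (rule someI[where P="is_FT g", OF assms])

lemma fmult_spec:
  assumes "L2 g0" "is_FT g0 (\<lambda>\<xi>. m \<xi> * FT f \<xi>)"
  shows "L2 (fmult m f) \<and> is_FT (fmult m f) (\<lambda>\<xi>. m \<xi> * FT f \<xi>)"
  unfolding fmult_def by (rule someI[where P="\<lambda>g. L2 g \<and> is_FT g (\<lambda>\<xi>. m \<xi> * FT f \<xi>)"]) (use assms in auto)

lemma key:
  assumes s: "s \<ge> 1/2" and H: "in_Hs s f"
  shows "integrable lborel (\<lambda>x. (Re (fmult (J_symb (s - 1/2)) f x))\<^sup>2)"
    and "(\<integral>x. (Re (fmult (J_symb (s - 1/2)) f x))\<^sup>2 \<partial>lborel) \<le> (Hs_norm (s - 1/2) (fmult Kinv_symb f))\<^sup>2"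
proof -
  have L: "L2 f" and wI: "integrable lborel (\<lambda>\<xi>. (1 + \<xi>\<^sup>2) powr s * (cmod (FT f \<xi>))\<^sup>2)"
    using H by (auto simp: in_Hs_def)
  have SF: "is_FT f (FT f)" by (rule FT_spec(1)[OF L])
  have LF: "L2 (FT f)" by (rule FT_L2[OF L])
  have Fm[measurable]: "FT f \<in> borel_measurable lborel" using LF by (simp add: L2_def)
  have wle: "(1 + \<xi>\<^sup>2) powr (s - 1/2) \<le> (1 + \<xi>\<^sup>2) powr s" for \<xi> :: real
    by (rule powr_mono) auto
  define G where "G = (\<lambda>\<xi>. J_symb (s - 1/2) \<xi> * FT f \<xi>)"
  have Gsq: "(cmod (G \<xi>))\<^sup>2 = (1 + \<xi>\<^sup>2) powr (s - 1/2) * (cmod (FT f \<xi>))\<^sup>2" for \<xi>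
    by (simp add: G_def norm_mult power_mult_distrib J_sq)
  have GL: "L2 G"
    unfolding L2_def
  proof
    show Gm: "G \<in> borel_measurable lborel" unfolding G_def by measurable
    show "integrable lborel (\<lambda>x. (cmod (G x))\<^sup>2)"
    proof (rule Bochner_Integration.integrable_bound[OF wI])
      show "(\<lambda>x. (cmod (G x))\<^sup>2) \<in> borel_measurable lborel" using Gm by measurable
      show "AE x in lborel. norm ((cmod (G x))\<^sup>2) \<le> norm ((1 + x\<^sup>2) powr s * (cmod (FT f x))\<^sup>2)"
        using wle by (auto simp: Gsq intro!: mult_right_mono)
    qed
  qed
  define G2 where "G2 = (\<lambda>\<xi>. Kinv_symb \<xi> * FT f \<xi>)"
  have G2sq: "(cmod (G2 \<xi>))\<^sup>2 = (cmod (Kinv_symb \<xi>))\<^sup>2 * (cmod (FT f \<xi>))\<^sup>2" for \<xi>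
    by (simp add: G2_def norm_mult power_mult_distrib)
  have wK: "(1 + \<xi>\<^sup>2) powr (s - 1/2) * (cmod (Kinv_symb \<xi>))\<^sup>2 \<le> 2 * (1 + \<xi>\<^sup>2) powr s" for \<xi> :: real
  proof -
    have "(1 + \<xi>\<^sup>2) powr (s - 1/2) * (cmod (Kinv_symb \<xi>))\<^sup>2 \<le> (1 + \<xi>\<^sup>2) powr (s - 1/2) * (2 * (1 + \<xi>\<^sup>2) powr (1/2))"
      using Kinv_bounds(2)[of \<xi>] one_abs_le[of \<xi>] by (intro mult_left_mono) auto
    also have "\<dots> = 2 * ((1 + \<xi>\<^sup>2) powr (s - 1/2) * (1 + \<xi>\<^sup>2) powr (1/2))" by simp
    also have "(1 + \<xi>\<^sup>2) powr (s - 1/2) * (1 + \<xi>\<^sup>2) powr (1/2) = (1 + \<xi>\<^sup>2) powr s"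
      by (simp add: powr_add[symmetric])
    finally show ?thesis .
  qed
  have w2I: "integrable lborel (\<lambda>\<xi>. 2 * ((1 + \<xi>\<^sup>2) powr s * (cmod (FT f \<xi>))\<^sup>2))" using wI by simp
  have G2L: "L2 G2"
    unfolding L2_def
  proof
    show Gm: "G2 \<in> borel_measurable lborel" unfolding G2_def by measurable
    show "integrable lborel (\<lambda>x. (cmod (G2 x))\<^sup>2)"
    proof (rule Bochner_Integration.integrable_bound[OF w2I])
      show "(\<lambda>x. (cmod (G2 x))\<^sup>2) \<in> borel_measurable lborel" using Gm by measurable
      show "AE x in lborel. norm ((cmod (G2 x))\<^sup>2) \<le> norm (2 * ((1 + x\<^sup>2) powr s * (cmod (FT f x))\<^sup>2))"
      proof (intro AE_I2)
        fix x :: real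
        have "(cmod (Kinv_symb x))\<^sup>2 \<le> 1 + \<bar>x\<bar>" by (rule Kinv_bounds(2))
        also have "\<dots> \<le> 2 * (1 + x\<^sup>2) powr (1/2)" by (rule one_abs_le)
        also have "\<dots> \<le> 2 * (1 + x\<^sup>2) powr s" using s by (intro mult_left_mono powr_mono) auto
        finally have "(cmod (Kinv_symb x))\<^sup>2 * (cmod (FT f x))\<^sup>2 \<le> 2 * (1 + x\<^sup>2) powr s * (cmod (FT f x))\<^sup>2"
          by (intro mult_right_mono) auto
        then show "norm ((cmod (G2 x))\<^sup>2) \<le> norm (2 * ((1 + x\<^sup>2) powr s * (cmod (FT f x))\<^sup>2))"
          by (simp add: G2sq mult.assoc)
      qed
    qed
  qed
  define g where "g = fmult (J_symb (s - 1/2)) f"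
  obtain g0 where g0: "L2 g0" "is_FT g0 G" "nrm2 g0 \<le> nrm2 G / (2 * pi)" using exists_inv[OF GL] by blast
  have gs: "L2 g \<and> is_FT g G" unfolding g_def G_def by (rule fmult_spec) (use g0 in \<open>auto simp: G_def\<close>)
  have "AE x in lborel. g x = g0 x" by (rule isFT_unique_left) (use gs g0 in auto)
  then have "nrm2 g = nrm2 g0" by (rule nrm2_AE_cong) (use gs g0 in \<open>auto simp: L2_def\<close>)
  then have gn: "nrm2 g \<le> nrm2 G / (2 * pi)" using g0 by simp
  have gm[measurable]: "g \<in> borel_measurable lborel" using gs by (simp add: L2_def)
  have Reb: "(Re (g x))\<^sup>2 \<le> (cmod (g x))\<^sup>2" for x
    using abs_Re_le_cmod[of "g x"] by (metis abs_ge_zero power2_abs power_mono)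
  show RI: "integrable lborel (\<lambda>x. (Re (fmult (J_symb (s - 1/2)) f x))\<^sup>2)"
    unfolding g_def[symmetric]
  proof (rule Bochner_Integration.integrable_bound[OF L2_int[of g]])
    show "L2 g" using gs by simp
    show "(\<lambda>x. (Re (g x))\<^sup>2) \<in> borel_measurable lborel" by measurable
    show "AE x in lborel. norm ((Re (g x))\<^sup>2) \<le> norm ((cmod (g x))\<^sup>2)" using Reb by simp
  qed
  have R1: "(\<integral>x. (Re (g x))\<^sup>2 \<partial>lborel) \<le> nrm2 g"
    unfolding nrm2_def
    by (rule integral_mono[OF RI[unfolded g_def[symmetric]] L2_int Reb]) (use gs in simp)
  define g2 where "g2 = fmult Kinv_symb f"
  obtain g20 where g20: "L2 g20" "is_FT g20 G2" using exists_inv[OF G2L] by blast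
  have g2s: "L2 g2 \<and> is_FT g2 G2" unfolding g2_def G2_def by (rule fmult_spec) (use g20 in \<open>auto simp: G2_def\<close>)
  have S2: "is_FT g2 (FT g2)" using g2s by (intro FT_of_witness) auto
  have ae2: "AE x in lborel. FT g2 x = G2 x" by (rule isFT_unique[OF S2]) (use g2s in auto)
  have FT2m[measurable]: "FT g2 \<in> borel_measurable lborel" using S2 by (simp add: is_FT_def L2_def)
  have G2m[measurable]: "G2 \<in> borel_measurable lborel" using G2L by (simp add: L2_def)
  define X where "X = (\<integral>\<xi>. (1 + \<xi>\<^sup>2) powr (s - 1/2) * (cmod (FT g2 \<xi>))\<^sup>2 \<partial>lborel)"
  have "X = (\<integral>\<xi>. (1 + \<xi>\<^sup>2) powr (s - 1/2) * (cmod (G2 \<xi>))\<^sup>2 \<partial>lborel)"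
    unfolding X_def by (rule integral_cong_AE) (use ae2 in auto)
  also have "\<dots> \<ge> (\<integral>\<xi>. (cmod (G \<xi>))\<^sup>2 \<partial>lborel)"
  proof (rule integral_mono)
    show "integrable lborel (\<lambda>\<xi>. (cmod (G \<xi>))\<^sup>2)" by (rule L2_int[OF GL])
    show "integrable lborel (\<lambda>\<xi>. (1 + \<xi>\<^sup>2) powr (s - 1/2) * (cmod (G2 \<xi>))\<^sup>2)"
    proof (rule Bochner_Integration.integrable_bound[OF w2I])
      show "(\<lambda>\<xi>. (1 + \<xi>\<^sup>2) powr (s - 1/2) * (cmod (G2 \<xi>))\<^sup>2) \<in> borel_measurable lborel" by measurable
      show "AE x in lborel. norm ((1 + x\<^sup>2) powr (s - 1/2) * (cmod (G2 x))\<^sup>2) \<le> norm (2 * ((1 + x\<^sup>2) powr s * (cmod (FT f x))\<^sup>2))"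
      proof (intro AE_I2)
        fix x :: real
        have "(1 + x\<^sup>2) powr (s - 1/2) * (cmod (G2 x))\<^sup>2 = ((1 + x\<^sup>2) powr (s - 1/2) * (cmod (Kinv_symb x))\<^sup>2) * (cmod (FT f x))\<^sup>2"
          by (simp add: G2sq)
        also have "\<dots> \<le> (2 * (1 + x\<^sup>2) powr s) * (cmod (FT f x))\<^sup>2" by (intro mult_right_mono wK) auto
        finally show "norm ((1 + x\<^sup>2) powr (s - 1/2) * (cmod (G2 x))\<^sup>2) \<le> norm (2 * ((1 + x\<^sup>2) powr s * (cmod (FT f x))\<^sup>2))"
          by (simp add: mult.assoc)
      qed
    qed
    fix \<xi> :: real
    have "(1 + \<xi>\<^sup>2) powr (s - 1/2) * (cmod (FT f \<xi>))\<^sup>2 \<le> (1 + \<xi>\<^sup>2) powr (s - 1/2) * ((cmod (Kinv_symb \<xi>))\<^sup>2 * (cmod (FT f \<xi>))\<^sup>2)"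
    proof -
      have k1: "(cmod (FT f \<xi>))\<^sup>2 \<le> (cmod (Kinv_symb \<xi>))\<^sup>2 * (cmod (FT f \<xi>))\<^sup>2"
        using mult_right_mono[OF Kinv_bounds(1)[of \<xi>], of "(cmod (FT f \<xi>))\<^sup>2"] by simp
      show ?thesis by (intro mult_left_mono k1) simp
    qed
    then show "(cmod (G \<xi>))\<^sup>2 \<le> (1 + \<xi>\<^sup>2) powr (s - 1/2) * (cmod (G2 \<xi>))\<^sup>2"
      by (simp add: Gsq G2sq)
  qed
  finally have XG: "nrm2 G \<le> X" unfolding nrm2_def .
  have X0: "X \<ge> 0" unfolding X_def by (intro integral_nonneg_AE) auto
  have "(Hs_norm (s - 1/2) g2)\<^sup>2 = 1 / (2 * pi) * X"
    unfolding Hs_norm_def X_def[symmetric] using X0 by simp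
  moreover have "nrm2 G / (2 * pi) \<le> 1 / (2 * pi) * X" using XG by (simp add: divide_right_mono)
  ultimately show "(\<integral>x. (Re (fmult (J_symb (s - 1/2)) f x))\<^sup>2 \<partial>lborel) \<le> (Hs_norm (s - 1/2) (fmult Kinv_symb f))\<^sup>2"
    using R1 gn unfolding g_def g2_def by linarith
qed

theorem lemma3p2:
  fixes s \<kappa> T :: real and \<eta> v :: "real \<Rightarrow> real \<Rightarrow> real"
  assumes "s \<ge> 1/2" and "\<kappa> > 0" and "T > 0"
    and "ww_solution s \<kappa> T \<eta> v"
    and "\<exists>h H. h > 0 \<and> H > 0 \<and> (\<forall>t\<in>{0..T}. \<forall>x. h - 1 \<le> \<eta> t x \<and> \<eta> t x \<le> H)"
  shows "\<exists>c C. c > 0 \<and> C > 0 \<and> (\<forall>t\<in>{0..T}.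
           c * energy_norm2 s \<kappa> (\<eta> t) (v t) \<le> Es s \<kappa> (\<eta> t) (v t) \<and>
           Es s \<kappa> (\<eta> t) (v t) \<le> C * energy_norm2 s \<kappa> (\<eta> t) (v t))"
proof -
  obtain h H where h: "h > 0" and H: "H > 0" and bd: "\<And>t x. t \<in> {0..T} \<Longrightarrow> h - 1 \<le> \<eta> t x \<and> \<eta> t x \<le> H"
    using assms(5) by blast
  have Hs: "\<And>t. t \<in> {0..T} \<Longrightarrow> in_Hs s (cx (v t))"
    using assms(4) by (auto simp: ww_solution_def cont_Hs_def)
  define c where "c = min h 1 / 2"
  define C where "C = (1 + H) / 2"
  have c: "c > 0" using h by (simp add: c_def)
  have C: "C > 0" using H by (simp add: C_def)
  have main: "c * energy_norm2 s \<kappa> (\<eta> t) (v t) \<le> Es s \<kappa> (\<eta> t) (v t) \<and>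
           Es s \<kappa> (\<eta> t) (v t) \<le> C * energy_norm2 s \<kappa> (\<eta> t) (v t)" if t: "t \<in> {0..T}" for t
  proof -
    define g where "g = fmult (J_symb (s - 1/2)) (cx (v t))"
    define R where "R = (\<integral>x. (Re (g x))\<^sup>2 \<partial>lborel)"
    define N3 where "N3 = (Hs_norm (s - 1/2) (fmult Kinv_symb (cx (v t))))\<^sup>2"
    define N where "N = energy_norm2 s \<kappa> (\<eta> t) (v t)"
    define I where "I = (\<integral>x. \<eta> t x * (Re (g x))\<^sup>2 \<partial>lborel)"
    have RI: "integrable lborel (\<lambda>x. (Re (g x))\<^sup>2)" unfolding g_def by (rule key(1)[OF assms(1) Hs[OF t]])
    have RN3: "R \<le> N3" unfolding R_def N3_def g_def by (rule key(2)[OF assms(1) Hs[OF t]])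
    have R0: "R \<ge> 0" unfolding R_def by (intro integral_nonneg_AE) auto
    have N3N: "N3 \<le> N"
      unfolding N_def N3_def energy_norm2_def using assms(2) by simp
    have Es: "Es s \<kappa> (\<eta> t) (v t) = N / 2 + I / 2"
      unfolding Es_def N_def I_def g_def by simp
    have Ibounds: "(h - 1) * R \<le> I \<and> I \<le> H * R \<or> I = 0"
    proof (cases "integrable lborel (\<lambda>x. \<eta> t x * (Re (g x))\<^sup>2)")
      case True
      have "(h - 1) * R = (\<integral>x. (h - 1) * (Re (g x))\<^sup>2 \<partial>lborel)" unfolding R_def by simp
      also have "\<dots> \<le> I" unfolding I_def
        by (rule integral_mono[OF _ True]) (use RI bd[OF t] in \<open>auto intro: mult_right_mono\<close>)
      finally have 1: "(h - 1) * R \<le> I" .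
      have "I \<le> (\<integral>x. H * (Re (g x))\<^sup>2 \<partial>lborel)" unfolding I_def
        by (rule integral_mono[OF True]) (use RI bd[OF t] in \<open>auto intro: mult_right_mono\<close>)
      also have "\<dots> = H * R" unfolding R_def by simp
      finally show ?thesis using 1 by simp
    next
      case False
      then show ?thesis unfolding I_def by (simp add: not_integrable_integral_eq)
    qed
    have RN: "R \<le> N" using RN3 N3N by linarith
    have N0: "N \<ge> 0" using R0 RN by linarith
    have cN: "c * N \<le> (1/2) * N" using N0 by (intro mult_right_mono) (auto simp: c_def)
    have low: "c * N \<le> N / 2 + I / 2"
    proof (cases "I = 0")
      case True
      then show ?thesis using cN by simp
    next
      case False
      then have I1: "(h - 1) * R \<le> I" and I2: "I \<le> H * R" using Ibounds by auto
      show ?thesis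
      proof (cases "h \<ge> 1")
        case True
        then have "I \<ge> 0" using I1 R0 by (smt (verit) mult_nonneg_nonneg)
        then show ?thesis using cN by simp
      next
        case False
        have "(h - 1) * N \<le> (h - 1) * R" using False RN by (intro mult_left_mono_neg) auto
        then have "(h - 1) * N \<le> I" using I1 by linarith
        moreover have "c = h / 2" using False by (simp add: c_def)
        then have "c * N = ((h - 1) * N + N) / 2" by (simp add: algebra_simps)
        moreover have "\<And>a b::real. a \<le> I \<Longrightarrow> b = (a + N) / 2 \<Longrightarrow> b \<le> N / 2 + I / 2" by (auto simp: field_simps)
        ultimately show ?thesis by blast
      qed
    qed
    have up: "N / 2 + I / 2 \<le> C * N"
    proof -
      have "I \<le> H * N"
      proof (cases "I = 0")
        case True then show ?thesis using H N0 by simp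
      next
        case False
        then have "I \<le> H * R" using Ibounds by auto
        also have "H * R \<le> H * N" using H RN by (intro mult_left_mono) auto
        finally show ?thesis .
      qed
      then show ?thesis by (simp add: C_def algebra_simps)
    qed
    show ?thesis using low up Es unfolding N_def by simp
  qed
  show ?thesis using c C main by blast
qed

end
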